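(* Let $n\ge 0$ be an even integer and $p\in\Gamma_n$. Then $\mathrm{Sub}(p)=\{\sigma_{n-1}(p),\pi_{n-1}(p)\}$; that is, the only occurrences of $(n-1)$-ambiguities in $p$ are the suffix $\sigma_{n-1}(p)$ and the prefix $\pi_{n-1}(p)$ (and these two are distinct).
   Context: Let $\Bbbk$ be a field, $Q=(Q_0,Q_1,s,t)$ a finite quiver, and $A=\Bbbk Q/I$ a finite-dimensional monomial algebra, i.e. $I$ is an ideal generated by paths of length at least $2$. Paths are written from right to left: a path is $p=\alpha_n\cdots\alpha_1$ with arrows $\alpha_i$ and $t(\alpha_i)=s(\alpha_{i+1})$; vertices are the paths of length $0$ (trivial paths, also denoted $1$); $qp$ denotes concatenation when $t(p)=s(q)$. Let $\mathcal B$ be the set of paths not lying in $I$. If $p=bqa$ for paths $a,b,q$, then $q$ is a divisor of $p$; we write $q\le p$ to mean that $q$ is a divisor of $p$ at a fixed position (an occurrence), and then $\mathrm{pre}_p(q):=a$, $\mathrm{suf}_p(q):=b$. If $b$ is trivial, $q$ is a suffix; if $a$ is trivial, $q$ is a prefix; proper means $q\neq p$, written $q\lneq p$. For $n\ge -1$, a left $n$-ambiguity is a path $p$ with a decomposition $p=u_{-1}u_0u_1\cdots u_n$ such that $u_{-1}\in Q_0$, $u_0\in Q_1$, $u_i\in\mathcal B$ for all $i$, and for every $0\le i\le n-1$, $u_iu_{i+1}\in I$ while no proper suffix of $u_iu_{i+1}$ lies in $I$ (one writes $p=u_0\cdots u_n$). A right $n$-ambiguity is a path with a decomposition $p=v_n\cdots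 v_0v_{-1}$ with $v_{-1}\in Q_0$, $v_0\in Q_1$, $v_i\in\mathcal B$, and for $0\le i\le n-1$, $v_{i+1}v_i\in I$ while no proper prefix of $v_{i+1}v_i$ lies in $I$. A path is a left $n$-ambiguity iff it is a right $n$-ambiguity; such paths are called $n$-ambiguities, and $\Gamma_n$ denotes their set. Both decompositions of an $n$-ambiguity are unique. For $p\in\Gamma_n$ with left decomposition $u_0\cdots u_n$ and right decomposition $v_n\cdots v_0$, and $-1\le m\le n$, set $\sigma_m(p):=u_0\cdots u_m$ (a suffix of $p$ which is an $m$-ambiguity) and $\pi_m(p):=v_m\cdots v_0$ (a prefix of $p$ which is an $m$-ambiguity). For $p\in\Gamma_n$, $\mathrm{Sub}(p):=\{q\in\Gamma_{n-1}: q\le p\}$ is the set of occurrences of $(n-1)$-ambiguities in $p$. *)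

theory Defs
  imports Main
begin

record ('v, 'a) quiver =
  verts :: "'v set"
  arrs  :: "'a set"
  srcA  :: "'a \<Rightarrow> 'v"
  tgtA  :: "'a \<Rightarrow> 'v"

text \<open>A path is a pair (w, v): w is the list of arrows in WRITTEN order
  (paths are written right to left, so hd w is the last arrow traversed and
  last w the first one), and v is the source vertex s(p) of the path.
  The trivial path at a vertex v is ([], v).\<close>

type_synonym ('a, 'v) qpath = "'a list \<times> 'v"

definition plen :: "('a, 'v) qpath \<Rightarrow> nat" where
  "plen p = length (fst p)"

definition psrc :: "('a, 'v) qpath \<Rightarrow> 'v" where
  "psrc p = snd p"

definition ptgt :: "('v, 'a, 'b) quiver_scheme \<Rightarrow> ('a, 'v) qpath \<Rightarrow> 'v" where
  "ptgt Q p = (if fst p = [] then snd p else tgtA Q (hd (fst p)))"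

definition is_path :: "('v, 'a, 'b) quiver_scheme \<Rightarrow> ('a, 'v) qpath \<Rightarrow> bool" where
  "is_path Q p \<longleftrightarrow> snd p \<in> verts Q \<and> set (fst p) \<subseteq> arrs Q
     \<and> (fst p \<noteq> [] \<longrightarrow> srcA Q (last (fst p)) = snd p)
     \<and> (\<forall>i. Suc i < length (fst p) \<longrightarrow> srcA Q (fst p ! i) = tgtA Q (fst p ! Suc i))"

definition finite_quiver :: "('v, 'a, 'b) quiver_scheme \<Rightarrow> bool" where
  "finite_quiver Q \<longleftrightarrow> finite (verts Q) \<and> finite (arrs Q)
     \<and> (\<forall>a\<in>arrs Q. srcA Q a \<in> verts Q \<and> tgtA Q a \<in> verts Q)"

text \<open>Concatenation qp (p first, then q), meaningful when t(p) = s(q).\<close>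
definition pcat :: "('a, 'v) qpath \<Rightarrow> ('a, 'v) qpath \<Rightarrow> ('a, 'v) qpath" where
  "pcat q p = (fst q @ fst p, snd p)"

text \<open>Vertex of p at position k (k = 0: target of p, k = plen p: source of p).\<close>
definition vertex_at :: "('v, 'a, 'b) quiver_scheme \<Rightarrow> ('a, 'v) qpath \<Rightarrow> nat \<Rightarrow> 'v" where
  "vertex_at Q p k = (if k < plen p then tgtA Q (fst p ! k) else snd p)"

text \<open>Occurrence of q as a divisor of p at (written) offset i, i.e. p = b q a
  with plen b = i.  Offset 0 means q is a suffix (b trivial); offset
  plen p - plen q means q is a prefix (a trivial).\<close>
definition occ_at :: "('v, 'a, 'b) quiver_scheme \<Rightarrow> ('a, 'v) qpath \<Rightarrow> nat \<Rightarrow> ('a, 'v) qpath \<Rightarrow> bool" where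
  "occ_at Q q i p \<longleftrightarrow> is_path Q q \<and> is_path Q p \<and> i + plen q \<le> plen p
     \<and> fst q = take (plen q) (drop i (fst p))
     \<and> snd q = vertex_at Q p (i + plen q)"

definition is_suffix :: "('v, 'a, 'b) quiver_scheme \<Rightarrow> ('a, 'v) qpath \<Rightarrow> ('a, 'v) qpath \<Rightarrow> bool" where
  "is_suffix Q q p \<longleftrightarrow> occ_at Q q 0 p"

definition is_prefix :: "('v, 'a, 'b) quiver_scheme \<Rightarrow> ('a, 'v) qpath \<Rightarrow> ('a, 'v) qpath \<Rightarrow> bool" where
  "is_prefix Q q p \<longleftrightarrow> occ_at Q q (plen p - plen q) p"

definition inI :: "('v, 'a, 'b) quiver_scheme \<Rightarrow> ('a, 'v) qpath set \<Rightarrow> ('a, 'v) qpath \<Rightarrow> bool" where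
  "inI Q R p \<longleftrightarrow> is_path Q p \<and> (\<exists>r\<in>R. \<exists>i. occ_at Q r i p)"

definition Bset :: "('v, 'a, 'b) quiver_scheme \<Rightarrow> ('a, 'v) qpath set \<Rightarrow> ('a, 'v) qpath set" where
  "Bset Q R = {p. is_path Q p \<and> \<not> inI Q R p}"

text \<open>Standing hypotheses: finite quiver, ideal generated by paths of length
  \<ge> 2, and A = kQ/I finite dimensional (i.e. the basis B is finite).\<close>
definition monomial_setting :: "('v, 'a, 'b) quiver_scheme \<Rightarrow> ('a, 'v) qpath set \<Rightarrow> bool" where
  "monomial_setting Q R \<longleftrightarrow> finite_quiver Q
     \<and> (\<forall>r\<in>R. is_path Q r \<and> plen r \<ge> 2) \<and> finite (Bset Q R)"

text \<open>Product of a composable list of paths [x_1, ..., x_k] = x_1 x_2 ... x_k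
  (written order; x_k traversed first).\<close>
definition composable :: "('v, 'a, 'b) quiver_scheme \<Rightarrow> ('a, 'v) qpath list \<Rightarrow> bool" where
  "composable Q xs \<longleftrightarrow> xs \<noteq> [] \<and> (\<forall>x\<in>set xs. is_path Q x)
     \<and> (\<forall>i. Suc i < length xs \<longrightarrow> ptgt Q (xs ! Suc i) = psrc (xs ! i))"

definition pprod :: "('a, 'v) qpath list \<Rightarrow> ('a, 'v) qpath" where
  "pprod xs = (concat (map fst xs), snd (last xs))"

text \<open>Left n-ambiguity decomposition p = u_{-1} u_0 ... u_n, n \<ge> -1,
  encoded as a list us with us ! k = u_{k-1}.\<close>
definition left_decomp :: "('v, 'a, 'b) quiver_scheme \<Rightarrow> ('a, 'v) qpath set \<Rightarrow> int
    \<Rightarrow> ('a, 'v) qpath \<Rightarrow> ('a, 'v) qpath list \<Rightarrow> bool" where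
  "left_decomp Q R n p us \<longleftrightarrow> n \<ge> -1 \<and> int (length us) = n + 2
     \<and> composable Q us \<and> p = pprod us
     \<and> plen (us ! 0) = 0
     \<and> (length us \<ge> 2 \<longrightarrow> plen (us ! 1) = 1)
     \<and> (\<forall>x\<in>set us. x \<in> Bset Q R)
     \<and> (\<forall>k. 1 \<le> k \<and> Suc k < length us \<longrightarrow>
          inI Q R (pcat (us ! k) (us ! Suc k))
          \<and> (\<forall>q. is_suffix Q q (pcat (us ! k) (us ! Suc k))
                 \<and> q \<noteq> pcat (us ! k) (us ! Suc k) \<longrightarrow> \<not> inI Q R q))"

text \<open>Right n-ambiguity decomposition p = v_n ... v_0 v_{-1},
  encoded as a list vs with vs ! k = v_{k-1}, so p = pprod (rev vs).\<close>
definition right_decomp :: "('v, 'a, 'b) quiver_scheme \<Rightarrow> ('a, 'v) qpath set \<Rightarrow> int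
    \<Rightarrow> ('a, 'v) qpath \<Rightarrow> ('a, 'v) qpath list \<Rightarrow> bool" where
  "right_decomp Q R n p vs \<longleftrightarrow> n \<ge> -1 \<and> int (length vs) = n + 2
     \<and> composable Q (rev vs) \<and> p = pprod (rev vs)
     \<and> plen (vs ! 0) = 0
     \<and> (length vs \<ge> 2 \<longrightarrow> plen (vs ! 1) = 1)
     \<and> (\<forall>x\<in>set vs. x \<in> Bset Q R)
     \<and> (\<forall>k. 1 \<le> k \<and> Suc k < length vs \<longrightarrow>
          inI Q R (pcat (vs ! Suc k) (vs ! k))
          \<and> (\<forall>q. is_prefix Q q (pcat (vs ! Suc k) (vs ! k))
                 \<and> q \<noteq> pcat (vs ! Suc k) (vs ! k) \<longrightarrow> \<not> inI Q R q))"

definition Gamma :: "('v, 'a, 'b) quiver_scheme \<Rightarrow> ('a, 'v) qpath set \<Rightarrow> int \<Rightarrow> ('a, 'v) qpath set" where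
  "Gamma Q R n = {p. \<exists>us. left_decomp Q R n p us}"

text \<open>sigma_m(p) = u_{-1} u_0 ... u_m and pi_m(p) = v_m ... v_0 v_{-1}, using the
  (unique) left resp. right decomposition of p \<in> Gamma_n.\<close>
definition sigma :: "('v, 'a, 'b) quiver_scheme \<Rightarrow> ('a, 'v) qpath set \<Rightarrow> int \<Rightarrow> int
    \<Rightarrow> ('a, 'v) qpath \<Rightarrow> ('a, 'v) qpath" where
  "sigma Q R n m p = pprod (take (nat (m + 2)) (THE us. left_decomp Q R n p us))"

definition pi :: "('v, 'a, 'b) quiver_scheme \<Rightarrow> ('a, 'v) qpath set \<Rightarrow> int \<Rightarrow> int
    \<Rightarrow> ('a, 'v) qpath \<Rightarrow> ('a, 'v) qpath" where
  "pi Q R n m p = pprod (rev (take (nat (m + 2)) (THE vs. right_decomp Q R n p vs)))"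

text \<open>Sub(p) for p \<in> Gamma_n: the occurrences (q, offset) of (n-1)-ambiguities in p.\<close>
definition Sub :: "('v, 'a, 'b) quiver_scheme \<Rightarrow> ('a, 'v) qpath set \<Rightarrow> int
    \<Rightarrow> ('a, 'v) qpath \<Rightarrow> (('a, 'v) qpath \<times> nat) set" where
  "Sub Q R n p = {(q, i). q \<in> Gamma Q R (n - 1) \<and> occ_at Q q i p}"

end

theory Submission
  imports Defs
begin


definition monoR :: "(nat \<Rightarrow> nat \<Rightarrow> bool) \<Rightarrow> bool" where
  "monoR Rel \<longleftrightarrow> (\<forall>x y x' y'. Rel x y \<longrightarrow> x' \<le> x \<longrightarrow> y \<le> y' \<longrightarrow> Rel x' y')"

definition lenR :: "(nat \<Rightarrow> nat \<Rightarrow> bool) \<Rightarrow> bool" where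
  "lenR Rel \<longleftrightarrow> (\<forall>x y. Rel x y \<longrightarrow> Suc x < y)"

definition LDpos :: "(nat \<Rightarrow> nat \<Rightarrow> bool) \<Rightarrow> nat \<Rightarrow> (nat \<Rightarrow> nat) \<Rightarrow> bool" where
  "LDpos Rel l E \<longleftrightarrow> (\<forall>k<l. E k \<le> E (Suc k)) \<and> E 1 = E 0 \<and> (2 \<le> l \<longrightarrow> E 2 = Suc (E 1))
    \<and> (\<forall>k<l. \<not> Rel (E k) (E (Suc k)))
    \<and> (\<forall>k. 1 \<le> k \<and> Suc k < l \<longrightarrow> Rel (E k) (E (k+2)) \<and> (\<forall>y. E k \<le> y \<and> y < E (k+2) \<longrightarrow> \<not> Rel (E k) y))"

definition RDpos :: "(nat \<Rightarrow> nat \<Rightarrow> bool) \<Rightarrow> nat \<Rightarrow> (nat \<Rightarrow> nat) \<Rightarrow> bool" where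
  "RDpos Rel l F \<longleftrightarrow> (\<forall>k<l. F (Suc k) \<le> F k) \<and> F 1 = F 0 \<and> (2 \<le> l \<longrightarrow> Suc (F 2) = F 1)
    \<and> (\<forall>k<l. \<not> Rel (F (Suc k)) (F k))
    \<and> (\<forall>k. 1 \<le> k \<and> Suc k < l \<longrightarrow> Rel (F (k+2)) (F k) \<and> (\<forall>x. F (k+2) < x \<and> x \<le> F k \<longrightarrow> \<not> Rel x (F k)))"

fun Fs :: "(nat \<Rightarrow> nat \<Rightarrow> bool) \<Rightarrow> nat \<Rightarrow> nat \<Rightarrow> nat" where
  "Fs Rel L 0 = L"
| "Fs Rel L (Suc 0) = L"
| "Fs Rel L (Suc (Suc 0)) = L - 1"
| "Fs Rel L (Suc (Suc (Suc k))) = (GREATEST x. x \<le> Fs Rel L (Suc k) \<and> Rel x (Fs Rel L (Suc k)))"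

fun Es :: "(nat \<Rightarrow> nat \<Rightarrow> bool) \<Rightarrow> nat \<Rightarrow> nat \<Rightarrow> nat" where
  "Es Rel s 0 = s"
| "Es Rel s (Suc 0) = s"
| "Es Rel s (Suc (Suc 0)) = Suc s"
| "Es Rel s (Suc (Suc (Suc k))) = (LEAST y. Es Rel s (Suc k) \<le> y \<and> Rel (Es Rel s (Suc k)) y)"

lemma Fs_step: "1 \<le> k \<Longrightarrow> Fs Rel L (k+2) = (GREATEST x. x \<le> Fs Rel L k \<and> Rel x (Fs Rel L k))"
  by (cases k) auto

lemma Es_step: "1 \<le> k \<Longrightarrow> Es Rel s (k+2) = (LEAST y. Es Rel s k \<le> y \<and> Rel (Es Rel s k) y)"
  by (cases k) auto

lemma greatest_props:
  fixes a b :: nat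
  assumes "a \<le> b" "Rel a b"
  shows "(GREATEST x. x \<le> b \<and> Rel x b) \<le> b \<and> Rel (GREATEST x. x \<le> b \<and> Rel x b) b
     \<and> a \<le> (GREATEST x. x \<le> b \<and> Rel x b)"
proof -
  let ?P = "\<lambda>x. x \<le> b \<and> Rel x b"
  have "?P (Greatest ?P)" by (rule GreatestI_nat[of ?P a b]) (use assms in auto)
  moreover have "a \<le> Greatest ?P" by (rule Greatest_le_nat[of ?P a b]) (use assms in auto)
  ultimately show ?thesis by auto
qed

lemma greatest_max:
  fixes x b :: nat
  assumes "x \<le> b" "Rel x b"
  shows "x \<le> (GREATEST x. x \<le> b \<and> Rel x b)"
  by (rule Greatest_le_nat[of _ x b]) (use assms in auto)

lemma least_props:
  fixes a b :: nat
  assumes "a \<le> b" "Rel a b"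
  shows "a \<le> (LEAST y. a \<le> y \<and> Rel a y) \<and> Rel a (LEAST y. a \<le> y \<and> Rel a y)
     \<and> (LEAST y. a \<le> y \<and> Rel a y) \<le> b"
proof -
  let ?P = "\<lambda>y. a \<le> y \<and> Rel a y"
  have "?P (Least ?P)" by (rule LeastI[of ?P b]) (use assms in auto)
  moreover have "Least ?P \<le> b" by (rule Least_le) (use assms in auto)
  ultimately show ?thesis by auto
qed

lemma least_min:
  fixes a y :: nat
  assumes "a \<le> y" "Rel a y"
  shows "(LEAST y. a \<le> y \<and> Rel a y) \<le> y"
  by (rule Least_le) (use assms in auto)

lemma LD_mono:
  assumes "LDpos Rel l E" "i \<le> j" "j \<le> l" shows "E i \<le> E j"
  using assms(2,3)
proof (induction j)
  case 0 then show ?case by simp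
next
  case (Suc j)
  show ?case
  proof (cases "i = Suc j")
    case False
    then have "i \<le> j" using Suc.prems by simp
    then have "E i \<le> E j" using Suc by simp
    moreover have "E j \<le> E (Suc j)" using assms(1) Suc.prems unfolding LDpos_def by simp
    ultimately show ?thesis by simp
  qed simp
qed

lemma RD_mono:
  assumes "RDpos Rel l F" "i \<le> j" "j \<le> l" shows "F j \<le> F i"
  using assms(2,3)
proof (induction j)
  case 0 then show ?case by simp
next
  case (Suc j)
  show ?case
  proof (cases "i = Suc j")
    case False
    then have "i \<le> j" using Suc.prems by simp
    then have "F j \<le> F i" using Suc by simp
    moreover have "F (Suc j) \<le> F j" using assms(1) Suc.prems unfolding RDpos_def by simp
    ultimately show ?thesis by simp
  qed simp
qed

lemma LD_facts:
  assumes "LDpos Rel l E"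
  shows "\<And>k. k < l \<Longrightarrow> E k \<le> E (Suc k)" "E 1 = E 0" "2 \<le> l \<Longrightarrow> E 2 = Suc (E 1)"
    "\<And>k. k < l \<Longrightarrow> \<not> Rel (E k) (E (Suc k))"
    "\<And>k. 1 \<le> k \<Longrightarrow> Suc k < l \<Longrightarrow> Rel (E k) (E (k+2))"
    "\<And>k y. 1 \<le> k \<Longrightarrow> Suc k < l \<Longrightarrow> E k \<le> y \<Longrightarrow> y < E (k+2) \<Longrightarrow> \<not> Rel (E k) y"
  using assms unfolding LDpos_def by blast+

lemma RD_facts:
  assumes "RDpos Rel l F"
  shows "\<And>k. k < l \<Longrightarrow> F (Suc k) \<le> F k" "F 1 = F 0" "2 \<le> l \<Longrightarrow> Suc (F 2) = F 1"
    "\<And>k. k < l \<Longrightarrow> \<not> Rel (F (Suc k)) (F k)"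
    "\<And>k. 1 \<le> k \<Longrightarrow> Suc k < l \<Longrightarrow> Rel (F (k+2)) (F k)"
    "\<And>k x. 1 \<le> k \<Longrightarrow> Suc k < l \<Longrightarrow> F (k+2) < x \<Longrightarrow> x \<le> F k \<Longrightarrow> \<not> Rel x (F k)"
  using assms unfolding RDpos_def by blast+

lemma monoRD: "monoR Rel \<Longrightarrow> Rel x y \<Longrightarrow> x' \<le> x \<Longrightarrow> y \<le> y' \<Longrightarrow> Rel x' y'"
  unfolding monoR_def by blast

lemma lenRD: "lenR Rel \<Longrightarrow> Rel x y \<Longrightarrow> Suc x < y"
  unfolding lenR_def by blast

lemma LD_strict:
  assumes LD: "LDpos Rel l E" and "1 \<le> k" "k < l"
  shows "E k < E (Suc k)"
proof (cases "k = 1")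
  case True
  then show ?thesis using LD_facts(3)[OF LD] assms by (simp add: numeral_2_eq_2)
next
  case False
  have le: "E k \<le> E (Suc k)" using LD_facts(1)[OF LD] assms by simp
  show ?thesis
  proof (rule ccontr)
    assume "\<not> ?thesis"
    then have eq: "E (Suc k) = E k" using le by simp
    have "Rel (E (k-1)) (E ((k-1)+2))" using LD_facts(5)[OF LD, of "k-1"] False assms by simp
    then have "Rel (E (k-1)) (E (Suc (k-1)))" using eq False assms by (simp add: Suc_diff_Suc numeral_2_eq_2)
    moreover have "k - 1 < l" using assms by simp
    ultimately show False using LD_facts(4)[OF LD] by blast
  qed
qed

lemma RD_strict:
  assumes RD: "RDpos Rel l F" and "1 \<le> k" "k < l"
  shows "F (Suc k) < F k"
proof (cases "k = 1")
  case True
  then show ?thesis using RD_facts(3)[OF RD] assms by (simp add: numeral_2_eq_2)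
next
  case False
  have le: "F (Suc k) \<le> F k" using RD_facts(1)[OF RD] assms by simp
  show ?thesis
  proof (rule ccontr)
    assume "\<not> ?thesis"
    then have eq: "F (Suc k) = F k" using le by simp
    have "Rel (F ((k-1)+2)) (F (k-1))" using RD_facts(5)[OF RD, of "k-1"] False assms by simp
    then have "Rel (F (Suc (k-1))) (F (k-1))" using eq False assms by (simp add: Suc_diff_Suc numeral_2_eq_2)
    moreover have "k - 1 < l" using assms by simp
    ultimately show False using RD_facts(4)[OF RD] by blast
  qed
qed

lemma LtoR_bounds:
  assumes mono: "monoR Rel" and LD: "LDpos Rel l E" and l2: "2 \<le> l" and EL: "E l = L"
  shows "2 \<le> m \<Longrightarrow> m \<le> l \<Longrightarrow> E (l+1-m) \<le> Fs Rel L m \<and> Fs Rel L m < E (l+2-m)"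
proof (induction m rule: less_induct)
  case (less m)
  have Emon: "\<And>i j. i \<le> j \<Longrightarrow> j \<le> l \<Longrightarrow> E i \<le> E j" using LD_mono[OF LD] by blast
  show ?case
  proof (cases "m = 2")
    case True
    have "E (l-1) < E (Suc (l-1))" by (rule LD_strict[OF LD]) (use l2 in auto)
    then have "E (l-1) < L" using l2 EL by simp
    then show ?thesis using True EL by (simp add: numeral_2_eq_2)
  next
    case m2: False
    show ?thesis
    proof (cases "m = 3")
      case True
      have F3: "Fs Rel L m = (GREATEST x. x \<le> L \<and> Rel x L)" using True by (simp add: numeral_3_eq_3)
      have l3: "3 \<le> l" using less True by simp
      have r: "Rel (E (l-2)) (E ((l-2)+2))" by (rule LD_facts(5)[OF LD]) (use l3 in auto)
      have e: "(l-2)+2 = l" using l3 by simp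
      have r': "Rel (E (l-2)) L" using r[unfolded e] EL by simp
      have "E (l-2) \<le> L" using Emon[of "l-2" l] EL by simp
      from greatest_props[where Rel=Rel, OF this r'] F3 have g: "Fs Rel L m \<le> L" "Rel (Fs Rel L m) L" "E (l-2) \<le> Fs Rel L m"
        by auto
      have up: "Fs Rel L m < E (l-1)"
      proof (rule ccontr)
        assume "\<not> ?thesis"
        then have "Rel (E (l-1)) L" using monoRD[OF mono g(2)] by simp
        moreover have "\<not> Rel (E (l-1)) (E (Suc (l-1)))" by (rule LD_facts(4)[OF LD]) (use l3 in auto)
        ultimately show False using l3 EL by simp
      qed
      show ?thesis using g up True l3 by (simp add: Suc_diff_Suc numeral_3_eq_3 numeral_2_eq_2)
    next
      case False
      then have m4: "4 \<le> m" using less m2 by simp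
      have IH: "E (l+1-(m-2)) \<le> Fs Rel L (m-2) \<and> Fs Rel L (m-2) < E (l+2-(m-2))"
        using less.IH[of "m-2"] m4 less.prems by simp
      define b where "b = Fs Rel L (m-2)"
      have Fm0: "Fs Rel L ((m-2)+2) = (GREATEST x. x \<le> b \<and> Rel x b)"
        unfolding b_def by (rule Fs_step) (use m4 in simp)
      have em: "(m-2)+2 = m" using m4 by simp
      have Fm: "Fs Rel L m = (GREATEST x. x \<le> b \<and> Rel x b)" using Fm0[unfolded em] .
      define j where "j = l+1-m"
      have hj2: "l+1-(m-2) = j+2" and hj1: "l+2-m = j+1" and hj3: "l+2-(m-2) = j+3"
        and hjl: "j+3 \<le> l" and hj0: "1 \<le> j"
        using m4 less.prems unfolding j_def by auto
      have IH': "E (j+2) \<le> b" "b < E (j+3)" using IH unfolding hj2 hj3 b_def by auto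
      have r: "Rel (E j) (E (j+2))" by (rule LD_facts(5)[OF LD]) (use hjl hj0 in auto)
      have a_le: "E j \<le> b" using IH'(1) Emon[of j "j+2"] hjl by simp
      have rb: "Rel (E j) b" using monoRD[OF mono r] IH'(1) by simp
      from greatest_props[where Rel=Rel, OF a_le rb] Fm have g: "Fs Rel L m \<le> b" "Rel (Fs Rel L m) b" "E j \<le> Fs Rel L m"
        by auto
      have up: "Fs Rel L m < E (j+1)"
      proof (rule ccontr)
        assume "\<not> ?thesis"
        then have rr: "Rel (E (j+1)) b" using monoRD[OF mono g(2)] by simp
        have "E (j+1) \<le> E (j+2)" by (rule Emon) (use hjl in auto)
        then have "E (j+1) \<le> b" using IH' by simp
        moreover have "b < E ((j+1)+2)" using IH' by (simp add: numeral_3_eq_3)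
        ultimately have "\<not> Rel (E (j+1)) b" using LD_facts(6)[OF LD, of "j+1" b] hjl by simp
        then show False using rr by simp
      qed
      show ?thesis using g up hj1 unfolding j_def by simp
    qed
  qed
qed

lemma LtoR:
  assumes mono: "monoR Rel" and len: "lenR Rel" and LD: "LDpos Rel l E" and l1: "1 \<le> l" and EL: "E l = L"
  shows "RDpos Rel l (Fs Rel L) \<and> Fs Rel L l = E 0"
proof (cases "l = 1")
  case True
  have "\<not> Rel L L" using lenRD[OF len, of L L] by auto
  then show ?thesis using True EL LD_facts(2)[OF LD] unfolding RDpos_def by auto
next
  case False
  then have l2: "2 \<le> l" using l1 by simp
  let ?F = "Fs Rel L"
  have Emon: "\<And>i j. i \<le> j \<Longrightarrow> j \<le> l \<Longrightarrow> E i \<le> E j" using LD_mono[OF LD] by blast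
  have B: "\<And>m. 2 \<le> m \<Longrightarrow> m \<le> l \<Longrightarrow> E (l+1-m) \<le> ?F m \<and> ?F m < E (l+2-m)"
    using LtoR_bounds[OF mono LD l2 EL] by blast
  have L1: "1 \<le> L" using Emon[of 2 l] l2 EL LD_facts(3)[OF LD] by simp
  have lowF: "\<And>k. 1 \<le> k \<Longrightarrow> k \<le> l \<Longrightarrow> E (l+1-k) \<le> ?F k"
  proof -
    fix k assume "1 \<le> k" "k \<le> l"
    then show "E (l+1-k) \<le> ?F k"
      using B[of k] EL by (cases "k = 1") auto
  qed
  have Fl: "?F l = E 0"
  proof -
    have "E 1 \<le> ?F l" "?F l < E 2" using B[of l] l2 by auto
    then show ?thesis using LD_facts(2,3)[OF LD] l2 by simp
  qed
  have dec: "\<forall>k<l. ?F (Suc k) \<le> ?F k"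
  proof (intro allI impI)
    fix k assume k: "k < l"
    show "?F (Suc k) \<le> ?F k"
    proof (cases "k \<le> 1")
      case True
      then show ?thesis by (cases k) auto
    next
      case False
      have "?F (Suc k) < E (l+2-Suc k)" using B[of "Suc k"] k False by simp
      moreover have "E (l+1-k) \<le> ?F k" using lowF[of k] k False by simp
      ultimately show ?thesis by simp
    qed
  qed
  have notrel: "\<forall>k<l. \<not> Rel (?F (Suc k)) (?F k)"
  proof (intro allI impI notI)
    fix k assume k: "k < l" and r: "Rel (?F (Suc k)) (?F k)"
    show False
    proof (cases "k \<le> 1")
      case True
      then show False using r lenRD[OF len r] L1 by (cases k) auto
    next
      case False
      have a: "E (l-k) \<le> ?F (Suc k)" using lowF[of "Suc k"] k by simp
      have r2: "Rel (E (l-k)) (?F k)" using monoRD[OF mono r a] by simp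
      have i1: "l - k \<le> l+1-k" and i2: "l+1-k \<le> l" using k False by auto
      have b1: "E (l-k) \<le> ?F k" using Emon[OF i1 i2] lowF[of k] k False by simp
      have b2: "?F k < E ((l-k)+2)" using B[of k] k False by (simp add: Suc_diff_le)
      have c1: "1 \<le> l - k" and c2: "Suc (l-k) < l" using k False by auto
      show False using LD_facts(6)[OF LD c1 c2 b1 b2] r2 by simp
    qed
  qed
  have relk: "\<forall>k. 1 \<le> k \<and> Suc k < l \<longrightarrow> Rel (?F (k+2)) (?F k) \<and> (\<forall>x. ?F (k+2) < x \<and> x \<le> ?F k \<longrightarrow> \<not> Rel x (?F k))"
  proof (intro allI impI)
    fix k assume k: "1 \<le> k \<and> Suc k < l"
    have Fk2: "?F (k+2) = (GREATEST x. x \<le> ?F k \<and> Rel x (?F k))" using Fs_step k by blast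
    have r0: "Rel (E (l-1-k)) (E ((l-1-k)+2))" by (rule LD_facts(5)[OF LD]) (use k in auto)
    have e: "(l-1-k)+2 = l+1-k" using k by linarith
    have lo: "E (l+1-k) \<le> ?F k" using lowF k by simp
    have r1: "Rel (E (l-1-k)) (?F k)" using monoRD[OF mono r0[unfolded e] _ lo] by simp
    have i1: "l-1-k \<le> l+1-k" and i2: "l+1-k \<le> l" using k by auto
    have a: "E (l-1-k) \<le> ?F k" using Emon[OF i1 i2] lo by simp
    show "Rel (?F (k+2)) (?F k) \<and> (\<forall>x. ?F (k+2) < x \<and> x \<le> ?F k \<longrightarrow> \<not> Rel x (?F k))"
      using greatest_props[where Rel=Rel, OF a r1] greatest_max[where Rel=Rel and b="?F k"] Fk2
      by (metis not_le)
  qed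
  show ?thesis unfolding RDpos_def using dec notrel relk Fl L1 by (simp add: numeral_2_eq_2)
qed

lemma RtoL_bounds:
  assumes mono: "monoR Rel" and RD: "RDpos Rel l F" and l2: "2 \<le> l" and Fl: "F l = s"
  shows "2 \<le> m \<Longrightarrow> m \<le> l \<Longrightarrow> F (l+2-m) < Es Rel s m \<and> Es Rel s m \<le> F (l+1-m)"
proof (induction m rule: less_induct)
  case (less m)
  have Fmon: "\<And>i j. i \<le> j \<Longrightarrow> j \<le> l \<Longrightarrow> F j \<le> F i" using RD_mono[OF RD] by blast
  show ?case
  proof (cases "m = 2")
    case True
    have "F (Suc (l-1)) < F (l-1)" by (rule RD_strict[OF RD]) (use l2 in auto)
    then have "s < F (l-1)" using l2 Fl by simp
    then show ?thesis using True Fl by (simp add: numeral_2_eq_2)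
  next
    case m2: False
    show ?thesis
    proof (cases "m = 3")
      case True
      have E3: "Es Rel s m = (LEAST y. s \<le> y \<and> Rel s y)" using True by (simp add: numeral_3_eq_3)
      have l3: "3 \<le> l" using less True by simp
      have r: "Rel (F ((l-2)+2)) (F (l-2))" by (rule RD_facts(5)[OF RD]) (use l3 in auto)
      have e: "(l-2)+2 = l" using l3 by simp
      have r': "Rel s (F (l-2))" using r[unfolded e] Fl by simp
      have "s \<le> F (l-2)" using Fmon[of "l-2" l] Fl by simp
      from least_props[where Rel=Rel, OF this r'] E3 have g: "s \<le> Es Rel s m" "Rel s (Es Rel s m)" "Es Rel s m \<le> F (l-2)"
        by auto
      have up: "F (l-1) < Es Rel s m"
      proof (rule ccontr)
        assume "\<not> ?thesis"
        then have "Rel s (F (l-1))" using monoRD[OF mono g(2)] by simp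
        moreover have "\<not> Rel (F (Suc (l-1))) (F (l-1))" by (rule RD_facts(4)[OF RD]) (use l3 in auto)
        ultimately show False using l3 Fl by simp
      qed
      show ?thesis using g up True l3 by (simp add: Suc_diff_Suc numeral_3_eq_3 numeral_2_eq_2)
    next
      case False
      then have m4: "4 \<le> m" using less m2 by simp
      have IH: "F (l+2-(m-2)) < Es Rel s (m-2) \<and> Es Rel s (m-2) \<le> F (l+1-(m-2))"
        using less.IH[of "m-2"] m4 less.prems by simp
      define a where "a = Es Rel s (m-2)"
      have Em0: "Es Rel s ((m-2)+2) = (LEAST y. a \<le> y \<and> Rel a y)"
        unfolding a_def by (rule Es_step) (use m4 in simp)
      have em: "(m-2)+2 = m" using m4 by simp
      have Em: "Es Rel s m = (LEAST y. a \<le> y \<and> Rel a y)" using Em0[unfolded em] .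
      define j where "j = l+1-m"
      have hj2: "l+1-(m-2) = j+2" and hj1: "l+2-m = j+1" and hj3: "l+2-(m-2) = j+3"
        and hjl: "j+3 \<le> l" and hj0: "1 \<le> j"
        using m4 less.prems unfolding j_def by auto
      have IH': "a \<le> F (j+2)" "F (j+3) < a" using IH unfolding hj2 hj3 a_def by auto
      have r: "Rel (F (j+2)) (F j)" by (rule RD_facts(5)[OF RD]) (use hjl hj0 in auto)
      have a_le: "a \<le> F j" using IH'(1) Fmon[of j "j+2"] hjl by simp
      have ra: "Rel a (F j)" using monoRD[OF mono r IH'(1)] by simp
      from least_props[where Rel=Rel, OF a_le ra] Em have g: "a \<le> Es Rel s m" "Rel a (Es Rel s m)" "Es Rel s m \<le> F j"
        by auto
      have up: "F (j+1) < Es Rel s m"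
      proof (rule ccontr)
        assume "\<not> ?thesis"
        then have rr: "Rel a (F (j+1))" using monoRD[OF mono g(2)] by simp
        have "F (j+2) \<le> F (j+1)" by (rule Fmon) (use hjl in auto)
        then have "a \<le> F (j+1)" using IH' by simp
        moreover have "F ((j+1)+2) < a" using IH' by (simp add: numeral_3_eq_3)
        ultimately have "\<not> Rel a (F (j+1))" using RD_facts(6)[OF RD, of "j+1" a] hjl by simp
        then show False using rr by simp
      qed
      show ?thesis using g up hj1 unfolding j_def by simp
    qed
  qed
qed

lemma RtoL:
  assumes mono: "monoR Rel" and len: "lenR Rel" and RD: "RDpos Rel l F" and l1: "1 \<le> l" and Fl: "F l = s"
  shows "LDpos Rel l (Es Rel s) \<and> Es Rel s l = F 0"
proof (cases "l = 1")
  case True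
  have "\<not> Rel s s" using lenRD[OF len, of s s] by auto
  then show ?thesis using True Fl RD_facts(2)[OF RD] unfolding LDpos_def by auto
next
  case False
  then have l2: "2 \<le> l" using l1 by simp
  let ?E = "Es Rel s"
  have Fmon: "\<And>i j. i \<le> j \<Longrightarrow> j \<le> l \<Longrightarrow> F j \<le> F i" using RD_mono[OF RD] by blast
  have B: "\<And>m. 2 \<le> m \<Longrightarrow> m \<le> l \<Longrightarrow> F (l+2-m) < ?E m \<and> ?E m \<le> F (l+1-m)"
    using RtoL_bounds[OF mono RD l2 Fl] by blast
  have upE: "\<And>k. 1 \<le> k \<Longrightarrow> k \<le> l \<Longrightarrow> ?E k \<le> F (l+1-k)"
  proof -
    fix k assume "1 \<le> k" "k \<le> l"
    then show "?E k \<le> F (l+1-k)"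
      using B[of k] Fl by (cases "k = 1") auto
  qed
  have El: "?E l = F 0"
  proof -
    have "F 2 < ?E l" "?E l \<le> F 1" using B[of l] l2 by auto
    then show ?thesis using RD_facts(2,3)[OF RD] l2 by simp
  qed
  have inc: "\<forall>k<l. ?E k \<le> ?E (Suc k)"
  proof (intro allI impI)
    fix k assume k: "k < l"
    show "?E k \<le> ?E (Suc k)"
    proof (cases "k \<le> 1")
      case True
      then show ?thesis by (cases k) auto
    next
      case False
      have "F (l+2-Suc k) < ?E (Suc k)" using B[of "Suc k"] k False by simp
      moreover have "?E k \<le> F (l+1-k)" using upE[of k] k False by simp
      ultimately show ?thesis by simp
    qed
  qed
  have notrel: "\<forall>k<l. \<not> Rel (?E k) (?E (Suc k))"
  proof (intro allI impI notI)
    fix k assume k: "k < l" and r: "Rel (?E k) (?E (Suc k))"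
    show False
    proof (cases "k \<le> 1")
      case True
      then show False using r lenRD[OF len r] by (cases k) auto
    next
      case False
      have a: "?E (Suc k) \<le> F (l-k)" using upE[of "Suc k"] k by simp
      have r2: "Rel (?E k) (F (l-k))" using monoRD[OF mono r _ a] by simp
      have i1: "l - k \<le> l+1-k" and i2: "l+1-k \<le> l" using k False by auto
      have b1: "?E k \<le> F (l-k)" using Fmon[OF i1 i2] upE[of k] k False by simp
      have b2: "F ((l-k)+2) < ?E k" using B[of k] k False by (simp add: Suc_diff_le)
      have c1: "1 \<le> l - k" and c2: "Suc (l-k) < l" using k False by auto
      show False using RD_facts(6)[OF RD c1 c2 b2 b1] r2 by simp
    qed
  qed
  have relk: "\<forall>k. 1 \<le> k \<and> Suc k < l \<longrightarrow> Rel (?E k) (?E (k+2)) \<and> (\<forall>y. ?E k \<le> y \<and> y < ?E (k+2) \<longrightarrow> \<not> Rel (?E k) y)"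
  proof (intro allI impI)
    fix k assume k: "1 \<le> k \<and> Suc k < l"
    have Ek2: "?E (k+2) = (LEAST y. ?E k \<le> y \<and> Rel (?E k) y)" using Es_step k by blast
    have r0: "Rel (F ((l-1-k)+2)) (F (l-1-k))" by (rule RD_facts(5)[OF RD]) (use k in auto)
    have e: "(l-1-k)+2 = l+1-k" using k by linarith
    have lo: "?E k \<le> F (l+1-k)" using upE k by simp
    have r1: "Rel (?E k) (F (l-1-k))" using monoRD[OF mono r0[unfolded e] lo] by simp
    have i1: "l-1-k \<le> l+1-k" and i2: "l+1-k \<le> l" using k by auto
    have a: "?E k \<le> F (l-1-k)" using Fmon[OF i1 i2] lo by simp
    show "Rel (?E k) (?E (k+2)) \<and> (\<forall>y. ?E k \<le> y \<and> y < ?E (k+2) \<longrightarrow> \<not> Rel (?E k) y)"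
      using least_props[where Rel=Rel, OF a r1] least_min[where Rel=Rel and a="?E k"] Ek2
      by (metis not_le)
  qed
  show ?thesis unfolding LDpos_def using inc notrel relk El by (simp add: numeral_2_eq_2)
qed

lemma LD_unique:
  assumes L1: "LDpos Rel l1 E" and L2: "LDpos Rel l2 E'" and e0: "E 0 = E' 0"
  shows "k \<le> l1 \<Longrightarrow> k \<le> l2 \<Longrightarrow> E k = E' k"
proof (induction k rule: less_induct)
  case (less k)
  show ?case
  proof (cases "k \<le> 2")
    case True
    then consider "k = 0" | "k = 1" | "k = 2" by linarith
    then show ?thesis
      using e0 LD_facts(2)[OF L1] LD_facts(2)[OF L2] LD_facts(3)[OF L1] LD_facts(3)[OF L2] less.prems
      by cases auto
  next
    case False
    define j where "j = k - 2"
    have kj: "k = j + 2" and j1: "1 \<le> j" using False unfolding j_def by auto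
    have IH: "E j = E' j" using less.IH[of j] less.prems kj by simp
    have r1: "Rel (E j) (E k)" using LD_facts(5)[OF L1, of j] kj j1 less.prems by simp
    have r2: "Rel (E' j) (E' k)" using LD_facts(5)[OF L2, of j] kj j1 less.prems by simp
    have m1: "E j \<le> E k" using LD_mono[OF L1, of j k] kj less.prems by simp
    have m2: "E' j \<le> E' k" using LD_mono[OF L2, of j k] kj less.prems by simp
    show ?thesis
    proof (rule ccontr)
      assume ne: "E k \<noteq> E' k"
      show False
      proof (cases "E k < E' k")
        case True
        have "\<not> Rel (E' j) (E k)" using LD_facts(6)[OF L2, of j "E k"] kj j1 less.prems True IH m1 by simp
        then show False using r1 IH by simp
      next
        case False
        then have "E' k < E k" using ne by simp
        then have "\<not> Rel (E j) (E' k)" using LD_facts(6)[OF L1, of j "E' k"] kj j1 less.prems IH m2 by simp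
        then show False using r2 IH by simp
      qed
    qed
  qed
qed

lemma RD_unique:
  assumes L1: "RDpos Rel l1 F" and L2: "RDpos Rel l2 F'" and e0: "F 0 = F' 0"
  shows "k \<le> l1 \<Longrightarrow> k \<le> l2 \<Longrightarrow> F k = F' k"
proof (induction k rule: less_induct)
  case (less k)
  show ?case
  proof (cases "k \<le> 2")
    case True
    then consider "k = 0" | "k = 1" | "k = 2" by linarith
    then show ?thesis
      using e0 RD_facts(2)[OF L1] RD_facts(2)[OF L2] RD_facts(3)[OF L1] RD_facts(3)[OF L2] less.prems
      by cases auto
  next
    case False
    define j where "j = k - 2"
    have kj: "k = j + 2" and j1: "1 \<le> j" using False unfolding j_def by auto
    have IH: "F j = F' j" using less.IH[of j] less.prems kj by simp
    have r1: "Rel (F k) (F j)" using RD_facts(5)[OF L1, of j] kj j1 less.prems by simp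
    have r2: "Rel (F' k) (F' j)" using RD_facts(5)[OF L2, of j] kj j1 less.prems by simp
    have m1: "F k \<le> F j" using RD_mono[OF L1, of j k] kj less.prems by simp
    have m2: "F' k \<le> F' j" using RD_mono[OF L2, of j k] kj less.prems by simp
    show ?thesis
    proof (rule ccontr)
      assume ne: "F k \<noteq> F' k"
      show False
      proof (cases "F k < F' k")
        case True
        have "\<not> Rel (F' k) (F j)" using RD_facts(6)[OF L1, of j "F' k"] kj j1 less.prems True IH m2 by simp
        then show False using r2 IH by simp
      next
        case False
        then have "F' k < F k" using ne by simp
        then have "\<not> Rel (F k) (F' j)" using RD_facts(6)[OF L2, of j "F k"] kj j1 less.prems IH m1 by simp
        then show False using r1 IH by simp
      qed
    qed
  qed
qed

lemma even_main:
  assumes mono: "monoR Rel" and LE: "LDpos Rel (2*m+2) E" and LG: "LDpos Rel (2*m+1) G"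
    and s: "E 0 < G 0"
  shows "E (2*m+2) \<le> G (2*m+1)"
proof -
  have "k \<le> m \<Longrightarrow> E (2*k+2) \<le> G (2*k+1)" for k
  proof (induction k)
    case 0
    then show ?case using s LD_facts(2,3)[OF LE] LD_facts(2)[OF LG] by (simp add: numeral_2_eq_2)
  next
    case (Suc k)
    have IH: "E (2*k+2) \<le> G (2*k+1)" using Suc by simp
    have rG: "Rel (G (2*k+1)) (G ((2*k+1)+2))" by (rule LD_facts(5)[OF LG]) (use Suc.prems in auto)
    have rE: "Rel (E (2*k+2)) (G (2*k+3))" using monoRD[OF mono rG IH] by (simp add: numeral_3_eq_3)
    have "G (2*k+1) \<le> G (2*k+3)" by (rule LD_mono[OF LG]) (use Suc.prems in auto)
    then have le: "E (2*k+2) \<le> G (2*k+3)" using IH by simp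
    show ?case
    proof (rule ccontr)
      assume "\<not> ?case"
      then have "G (2*k+3) < E ((2*k+2)+2)" by (simp add: numeral_3_eq_3)
      then have "\<not> Rel (E (2*k+2)) (G (2*k+3))" using LD_facts(6)[OF LE, of "2*k+2"] le Suc.prems by simp
      then show False using rE by simp
    qed
  qed
  then show ?thesis by simp
qed



definition seg :: "('v, 'a, 'b) quiver_scheme \<Rightarrow> ('a, 'v) qpath \<Rightarrow> nat \<Rightarrow> nat \<Rightarrow> ('a, 'v) qpath" where
  "seg Q p x y = (take (y - x) (drop x (fst p)), vertex_at Q p y)"

definition RelP :: "('v, 'a, 'b) quiver_scheme \<Rightarrow> ('a, 'v) qpath set \<Rightarrow> ('a, 'v) qpath \<Rightarrow> nat \<Rightarrow> nat \<Rightarrow> bool" where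
  "RelP Q R p x y \<longleftrightarrow> (\<exists>r\<in>R. \<exists>j. x \<le> j \<and> j + plen r \<le> y \<and> occ_at Q r j p)"

lemma monoR_RelP: "monoR (RelP Q R p)"
  unfolding monoR_def RelP_def by (meson le_trans)

lemma lenR_RelP: "\<forall>r\<in>R. 2 \<le> plen r \<Longrightarrow> lenR (RelP Q R p)"
  unfolding lenR_def RelP_def by fastforce

lemma chain_mono:
  assumes "\<forall>k<l. E k \<le> E (Suc k)" shows "i \<le> j \<Longrightarrow> j \<le> l \<Longrightarrow> (E i :: nat) \<le> E j"
proof (induction j)
  case 0 then show ?case by simp
next
  case (Suc j)
  show ?case
  proof (cases "i = Suc j")
    case False
    then have "E i \<le> E j" using Suc by simp
    moreover have "E j \<le> E (Suc j)" using assms Suc.prems by simp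
    ultimately show ?thesis by simp
  qed simp
qed

lemma composable_tl: "composable Q (x # xs) \<Longrightarrow> xs \<noteq> [] \<Longrightarrow> composable Q xs"
  unfolding composable_def by (auto dest!: spec[of _ "Suc _"])

lemma pcat_path:
  assumes a: "is_path Q a" and b: "is_path Q b" and c: "ptgt Q b = psrc a"
  shows "is_path Q (pcat a b) \<and> ptgt Q (pcat a b) = ptgt Q a"
proof -
  have ptgt: "ptgt Q (pcat a b) = ptgt Q a"
    using c unfolding ptgt_def psrc_def pcat_def by auto
  have A: "snd (pcat a b) \<in> verts Q" using b unfolding is_path_def pcat_def by auto
  have B: "set (fst (pcat a b)) \<subseteq> arrs Q" using a b unfolding is_path_def pcat_def by auto
  have C: "fst (pcat a b) \<noteq> [] \<longrightarrow> srcA Q (last (fst (pcat a b))) = snd (pcat a b)"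
  proof (cases "fst b = []")
    case True
    then show ?thesis using a c unfolding is_path_def pcat_def ptgt_def psrc_def by auto
  next
    case False
    then show ?thesis using b unfolding is_path_def pcat_def by auto
  qed
  have D: "\<forall>i. Suc i < length (fst (pcat a b)) \<longrightarrow> srcA Q (fst (pcat a b) ! i) = tgtA Q (fst (pcat a b) ! Suc i)"
  proof (intro allI impI)
    fix i assume i: "Suc i < length (fst (pcat a b))"
    let ?la = "length (fst a)"
    consider "Suc i < ?la" | "Suc i = ?la" | "?la < Suc i" by linarith
    then show "srcA Q (fst (pcat a b) ! i) = tgtA Q (fst (pcat a b) ! Suc i)"
    proof cases
      case 1 then show ?thesis using a unfolding is_path_def pcat_def by (simp add: nth_append)
    next
      case 2
      then have ne: "fst a \<noteq> []" "fst b \<noteq> []" using i unfolding pcat_def by auto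
      have ii: "i = length (fst a) - 1" using 2 by simp
      have "fst (pcat a b) ! i = last (fst a)" using 2 ne unfolding pcat_def by (simp add: nth_append last_conv_nth ii)
      moreover have "fst (pcat a b) ! Suc i = hd (fst b)" using 2 ne unfolding pcat_def by (simp add: nth_append hd_conv_nth)
      moreover have "srcA Q (last (fst a)) = snd a" using a ne unfolding is_path_def by auto
      moreover have "snd a = tgtA Q (hd (fst b))" using c ne unfolding ptgt_def psrc_def by auto
      ultimately show ?thesis by simp
    next
      case 3
      then have "Suc (i - ?la) < length (fst b)" using i unfolding pcat_def by auto
      then show ?thesis using b 3 unfolding is_path_def pcat_def by (auto simp: nth_append Suc_diff_le)
    qed
  qed
  show ?thesis using A B C D ptgt unfolding is_path_def by blast
qed

lemma pprod_path: "composable Q xs \<Longrightarrow> is_path Q (pprod xs) \<and> ptgt Q (pprod xs) = ptgt Q (hd xs)"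
proof (induction xs)
  case Nil then show ?case unfolding composable_def by simp
next
  case (Cons x xs)
  show ?case
  proof (cases "xs = []")
    case True
    have "pprod [x] = x" unfolding pprod_def by simp
    then show ?thesis using True Cons.prems unfolding composable_def by simp
  next
    case False
    have eq: "pprod (x # xs) = pcat x (pprod xs)" using False unfolding pprod_def pcat_def by simp
    have IH: "is_path Q (pprod xs) \<and> ptgt Q (pprod xs) = ptgt Q (hd xs)" using Cons.IH composable_tl[OF Cons.prems False] by blast
    have "ptgt Q (xs ! 0) = psrc x" using Cons.prems False unfolding composable_def by fastforce
    then have c: "ptgt Q (pprod xs) = psrc x" using IH False by (simp add: hd_conv_nth)
    have "is_path Q x" using Cons.prems unfolding composable_def by simp
    then show ?thesis using pcat_path[OF _ _ c] IH eq by simp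
  qed
qed

lemma LD_trunc: "LDpos Rel l E \<Longrightarrow> l' \<le> l \<Longrightarrow> LDpos Rel l' E"
  unfolding LDpos_def by auto

lemma RD_trunc: "RDpos Rel l F \<Longrightarrow> l' \<le> l \<Longrightarrow> RDpos Rel l' F"
  unfolding RDpos_def by auto

locale pctx =
  fixes Q :: "('v, 'a, 'b) quiver_scheme" and p :: "('a, 'v) qpath"
  assumes fq: "finite_quiver Q" and pp: "is_path Q p"
begin

abbreviation "w \<equiv> fst p"
abbreviation "L \<equiv> length (fst p)"

lemma p_facts: "snd p \<in> verts Q" "set w \<subseteq> arrs Q" "w \<noteq> [] \<Longrightarrow> srcA Q (last w) = snd p"
  "\<And>i. Suc i < L \<Longrightarrow> srcA Q (w ! i) = tgtA Q (w ! Suc i)"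
  using pp unfolding is_path_def by auto

lemma plen_p: "plen p = L" by (simp add: plen_def)

lemma seg_plen: "x \<le> y \<Longrightarrow> y \<le> L \<Longrightarrow> plen (seg Q p x y) = y - x"
  by (simp add: seg_def plen_def)

lemma seg_fst_nth: "x \<le> y \<Longrightarrow> y \<le> L \<Longrightarrow> i < y - x \<Longrightarrow> fst (seg Q p x y) ! i = w ! (x + i)"
  by (simp add: seg_def)

lemma vertex_in: "k \<le> L \<Longrightarrow> vertex_at Q p k \<in> verts Q"
proof -
  assume k: "k \<le> L"
  show ?thesis
  proof (cases "k < L")
    case True
    then have "w ! k \<in> arrs Q" using p_facts(2) nth_mem by blast
    then show ?thesis using fq True unfolding finite_quiver_def vertex_at_def plen_def by auto
  next
    case False
    then show ?thesis using p_facts(1) unfolding vertex_at_def plen_def by auto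
  qed
qed

lemma src_before: "1 \<le> y \<Longrightarrow> y \<le> L \<Longrightarrow> srcA Q (w ! (y - 1)) = vertex_at Q p y"
proof -
  assume y: "1 \<le> y" "y \<le> L"
  show ?thesis
  proof (cases "y < L")
    case True
    then have "srcA Q (w ! (y-1)) = tgtA Q (w ! Suc (y-1))" using p_facts(4)[of "y-1"] y by simp
    then show ?thesis using True y unfolding vertex_at_def plen_def by simp
  next
    case False
    then have "y = L" using y by simp
    moreover have "w \<noteq> []" using y \<open>y = L\<close> by auto
    ultimately show ?thesis using p_facts(3) unfolding vertex_at_def plen_def by (simp add: last_conv_nth)
  qed
qed

lemma seg_path: "x \<le> y \<Longrightarrow> y \<le> L \<Longrightarrow> is_path Q (seg Q p x y)"
proof -
  assume xy: "x \<le> y" "y \<le> L"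
  have a: "snd (seg Q p x y) \<in> verts Q" using vertex_in xy by (simp add: seg_def)
  have b: "set (fst (seg Q p x y)) \<subseteq> arrs Q" using p_facts(2) unfolding seg_def
    by (auto dest: in_set_takeD in_set_dropD)
  have c: "fst (seg Q p x y) \<noteq> [] \<longrightarrow> srcA Q (last (fst (seg Q p x y))) = snd (seg Q p x y)"
  proof
    assume ne: "fst (seg Q p x y) \<noteq> []"
    then have xy': "x < y" using xy by (simp add: seg_def)
    have "last (fst (seg Q p x y)) = fst (seg Q p x y) ! (y - x - 1)"
      using ne seg_plen[OF xy] by (simp add: last_conv_nth plen_def)
    also have "\<dots> = w ! (y - 1)" using seg_fst_nth[OF xy, of "y-x-1"] xy' by simp
    finally show "srcA Q (last (fst (seg Q p x y))) = snd (seg Q p x y)"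
      using src_before[of y] xy xy' by (simp add: seg_def)
  qed
  have d: "\<forall>i. Suc i < length (fst (seg Q p x y)) \<longrightarrow> srcA Q (fst (seg Q p x y) ! i) = tgtA Q (fst (seg Q p x y) ! Suc i)"
  proof (intro allI impI)
    fix i assume i: "Suc i < length (fst (seg Q p x y))"
    then have i': "Suc i < y - x" using seg_plen[OF xy] by (simp add: plen_def)
    show "srcA Q (fst (seg Q p x y) ! i) = tgtA Q (fst (seg Q p x y) ! Suc i)"
      using seg_fst_nth[OF xy] i' p_facts(4)[of "x+i"] xy by simp
  qed
  show ?thesis using a b c d unfolding is_path_def by blast
qed

lemma vertex_at_seg: "x \<le> y \<Longrightarrow> y \<le> L \<Longrightarrow> k \<le> y - x \<Longrightarrow> vertex_at Q (seg Q p x y) k = vertex_at Q p (x + k)"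
proof -
  assume xy: "x \<le> y" "y \<le> L" and k: "k \<le> y - x"
  show ?thesis
  proof (cases "k < y - x")
    case True
    have "x + k < L" using True xy by simp
    then show ?thesis using seg_fst_nth[OF xy True] seg_plen[OF xy] xy True
      unfolding vertex_at_def plen_def by simp
  next
    case False
    then have "k = y - x" using k by simp
    then have "vertex_at Q (seg Q p x y) k = snd (seg Q p x y)" using seg_plen[OF xy] unfolding vertex_at_def by simp
    then show ?thesis using \<open>k = y - x\<close> xy by (simp add: seg_def)
  qed
qed

lemma occ_p_iff: "occ_at Q q i p \<longleftrightarrow> is_path Q q \<and> i + plen q \<le> L \<and> q = seg Q p i (i + plen q)"
proof
  assume "occ_at Q q i p"
  then show "is_path Q q \<and> i + plen q \<le> L \<and> q = seg Q p i (i + plen q)"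
    unfolding occ_at_def seg_def plen_def by (simp add: prod_eq_iff)
next
  assume "is_path Q q \<and> i + plen q \<le> L \<and> q = seg Q p i (i + plen q)"
  then show "occ_at Q q i p" using pp unfolding occ_at_def
    by (metis add_diff_cancel_left' fst_conv plen_def seg_def snd_conv)
qed

lemma occ_seg_iff:
  assumes xy: "x \<le> y" "y \<le> L"
  shows "occ_at Q q k (seg Q p x y) \<longleftrightarrow> occ_at Q q (x+k) p \<and> k + plen q \<le> y - x"
proof (cases "k + plen q \<le> y - x")
  case False
  then show ?thesis unfolding occ_at_def using seg_plen[OF xy] by simp
next
  case True
  have t: "take (plen q) (drop k (fst (seg Q p x y))) = take (plen q) (drop (x+k) w)"
    using True unfolding seg_def by (simp add: drop_take min_def add.commute)
  have v: "vertex_at Q (seg Q p x y) (k + plen q) = vertex_at Q p (x + k + plen q)"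
    using vertex_at_seg[OF xy, of "k + plen q"] True by (simp add: add.assoc)
  show ?thesis unfolding occ_at_def using True t v seg_path[OF xy] seg_plen[OF xy] pp xy
    by (auto simp: plen_def)
qed

lemma inI_seg:
  assumes xy: "x \<le> y" "y \<le> L"
  shows "inI Q R (seg Q p x y) \<longleftrightarrow> RelP Q R p x y"
proof
  assume "inI Q R (seg Q p x y)"
  then obtain r k where "r \<in> R" "occ_at Q r k (seg Q p x y)" unfolding inI_def by blast
  then have o: "occ_at Q r (x+k) p" "k + plen r \<le> y - x" using occ_seg_iff[OF xy] by auto
  have "x + k + plen r \<le> y" using o(2) xy by simp
  then show "RelP Q R p x y" unfolding RelP_def using o(1) \<open>r \<in> R\<close> by (intro bexI[of _ r] exI[of _ "x+k"]) auto
next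
  assume "RelP Q R p x y"
  then obtain r j where r: "r \<in> R" "x \<le> j" "j + plen r \<le> y" "occ_at Q r j p" unfolding RelP_def by blast
  then have "occ_at Q r (j - x) (seg Q p x y)" using occ_seg_iff[OF xy, of r "j-x"] by simp
  then show "inI Q R (seg Q p x y)" unfolding inI_def using seg_path[OF xy] r(1) by blast
qed

lemma pcat_seg:
  assumes "x \<le> y" "y \<le> z" "z \<le> L"
  shows "pcat (seg Q p x y) (seg Q p y z) = seg Q p x z"
proof -
  have e: "z-x = (y-x)+(z-y)" using assms by simp
  have d: "drop (y - x) (drop x w) = drop y w" using assms by simp
  have "take (z-x) (drop x w) = take (y-x) (drop x w) @ take (z-y) (drop y w)"
    unfolding e take_add d ..
  then show ?thesis unfolding pcat_def seg_def by simp
qed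

lemma ptgt_seg: "x \<le> y \<Longrightarrow> y \<le> L \<Longrightarrow> ptgt Q (seg Q p x y) = vertex_at Q p x"
  unfolding ptgt_def seg_def vertex_at_def plen_def by (auto simp: hd_drop_conv_nth)

lemma psrc_seg: "psrc (seg Q p x y) = vertex_at Q p y"
  unfolding psrc_def seg_def by simp

lemma seg_inj: "x \<le> y \<Longrightarrow> y \<le> L \<Longrightarrow> x' \<le> y' \<Longrightarrow> y' \<le> L \<Longrightarrow> seg Q p x y = seg Q p x' y' \<Longrightarrow> y - x = y' - x'"
  by (metis seg_plen)

lemma suffix_seg:
  assumes xz: "x \<le> z" "z \<le> L"
  shows "is_suffix Q q (seg Q p x z) \<longleftrightarrow> (\<exists>y. x \<le> y \<and> y \<le> z \<and> q = seg Q p x y)"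
proof
  assume "is_suffix Q q (seg Q p x z)"
  then have "occ_at Q q x p" "plen q \<le> z - x" unfolding is_suffix_def using occ_seg_iff[OF xz, of q 0] by auto
  then show "\<exists>y. x \<le> y \<and> y \<le> z \<and> q = seg Q p x y" using occ_p_iff xz by (intro exI[of _ "x + plen q"]) auto
next
  assume "\<exists>y. x \<le> y \<and> y \<le> z \<and> q = seg Q p x y"
  then obtain y where y: "x \<le> y" "y \<le> z" "q = seg Q p x y" by blast
  have pl: "plen q = y - x" using y seg_plen xz by simp
  have "occ_at Q q x p" using occ_p_iff[of q x] y pl seg_path xz by simp
  then show "is_suffix Q q (seg Q p x z)" unfolding is_suffix_def using occ_seg_iff[OF xz, of q 0] pl y by simp
qed

lemma prefix_seg:
  assumes xz: "x \<le> z" "z \<le> L"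
  shows "is_prefix Q q (seg Q p x z) \<longleftrightarrow> (\<exists>y. x \<le> y \<and> y \<le> z \<and> q = seg Q p y z)"
proof
  assume a: "is_prefix Q q (seg Q p x z)"
  let ?k = "z - x - plen q"
  have "occ_at Q q ?k (seg Q p x z)" using a unfolding is_prefix_def seg_plen[OF xz] .
  then have o: "occ_at Q q (x + ?k) p" "?k + plen q \<le> z - x" using occ_seg_iff[OF xz] by auto
  then have pl: "plen q \<le> z - x" by simp
  then have e: "x + ?k + plen q = z" using xz by simp
  show "\<exists>y. x \<le> y \<and> y \<le> z \<and> q = seg Q p y z" using o(1) occ_p_iff[of q "x + ?k"] e
    by (intro exI[of _ "x + ?k"]) auto
next
  assume "\<exists>y. x \<le> y \<and> y \<le> z \<and> q = seg Q p y z"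
  then obtain y where y: "x \<le> y" "y \<le> z" "q = seg Q p y z" by blast
  have pl: "plen q = z - y" using y seg_plen xz by simp
  have o: "occ_at Q q y p" using occ_p_iff[of q y] y pl seg_path xz by simp
  have "z - x - plen q = y - x" using pl y by simp
  then show "is_prefix Q q (seg Q p x z)" unfolding is_prefix_def seg_plen[OF xz]
    using occ_seg_iff[OF xz, of q "y - x"] o pl y by simp
qed

lemma decomp_list:
  "composable Q xs \<Longrightarrow> pprod xs = seg Q p a b \<Longrightarrow> a \<le> b \<Longrightarrow> b \<le> L \<Longrightarrow>
   \<exists>E. E 0 = a \<and> E (length xs) = b \<and> (\<forall>k<length xs. E k \<le> E (Suc k))
      \<and> (\<forall>k<length xs. xs ! k = seg Q p (E k) (E (Suc k)))"
proof (induction xs arbitrary: a)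
  case Nil
  then show ?case unfolding composable_def by simp
next
  case (Cons x xs)
  show ?case
  proof (cases "xs = []")
    case True
    have "x = seg Q p a b" using Cons.prems True unfolding pprod_def by (simp add: prod_eq_iff)
    then show ?thesis using True Cons.prems by (intro exI[of _ "\<lambda>k. if k = 0 then a else b"]) auto
  next
    case False
    have f: "fst x @ concat (map fst xs) = take (b-a) (drop a w)" and sn: "snd (last xs) = vertex_at Q p b"
      using Cons.prems False unfolding pprod_def seg_def by auto
    define c where "c = a + plen x"
    have plx: "plen x \<le> b - a" using arg_cong[OF f, of length] Cons.prems unfolding plen_def by simp
    have fx: "fst x = take (c - a) (drop a w)" using arg_cong[OF f, of "take (plen x)"] plx
      unfolding c_def plen_def by simp
    have fxs: "concat (map fst xs) = take (b - c) (drop c w)" using arg_cong[OF f, of "drop (plen x)"] plx Cons.prems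
      unfolding c_def plen_def by (simp add: drop_take add.commute)
    have pxs: "pprod xs = seg Q p c b" using fxs sn unfolding pprod_def seg_def by simp
    have cxs: "composable Q xs" using composable_tl[OF Cons.prems(1) False] .
    have cb: "c \<le> b" using plx Cons.prems unfolding c_def by simp
    obtain E' where E': "E' 0 = c" "E' (length xs) = b" "\<forall>k<length xs. E' k \<le> E' (Suc k)"
      "\<forall>k<length xs. xs ! k = seg Q p (E' k) (E' (Suc k))"
      using Cons.IH[OF cxs pxs cb Cons.prems(4)] by blast
    have l1: "0 < length xs" using False by simp
    have e1: "E' 1 \<le> b" using chain_mono[OF E'(3), of 1 "length xs"] E'(2) l1 by simp
    have c1: "c \<le> E' 1" using E'(3) E'(1) l1 by auto
    have "ptgt Q (xs ! 0) = psrc x" using Cons.prems(1) l1 unfolding composable_def by fastforce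
    then have "psrc x = vertex_at Q p c" using E'(4) l1 E'(1) ptgt_seg[OF c1] e1 Cons.prems(4) by simp
    then have x: "x = seg Q p a c" using fx unfolding psrc_def seg_def by (simp add: prod_eq_iff)
    let ?E = "\<lambda>k. case k of 0 \<Rightarrow> a | Suc k' \<Rightarrow> E' k'"
    have "\<forall>k<length (x # xs). ?E k \<le> ?E (Suc k)"
    proof (intro allI impI)
      fix k assume "k < length (x # xs)"
      then show "?E k \<le> ?E (Suc k)" using E'(1,3) c_def by (cases k) auto
    qed
    moreover have "\<forall>k<length (x # xs). (x # xs) ! k = seg Q p (?E k) (?E (Suc k))"
    proof (intro allI impI)
      fix k assume "k < length (x # xs)"
      then show "(x # xs) ! k = seg Q p (?E k) (?E (Suc k))" using E'(1,4) x by (cases k) auto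
    qed
    ultimately show ?thesis using E'(2) by (intro exI[of _ ?E]) auto
  qed
qed

lemma build_list:
  assumes mon: "\<forall>k<l. E k \<le> E (Suc k)" and El: "E l \<le> L" and l1: "1 \<le> l"
  shows "composable Q (map (\<lambda>k. seg Q p (E k) (E (Suc k))) [0..<l])
     \<and> pprod (map (\<lambda>k. seg Q p (E k) (E (Suc k))) [0..<l]) = seg Q p (E 0) (E l)"
  using mon El l1
proof (induction l)
  case 0 then show ?case by simp
next
  case (Suc l)
  have bnd: "\<And>k. k \<le> Suc l \<Longrightarrow> E k \<le> L" using chain_mono[OF Suc.prems(1)] Suc.prems(2) by (meson le_trans order_refl)
  have m0: "\<And>i j. i \<le> j \<Longrightarrow> j \<le> Suc l \<Longrightarrow> E i \<le> E j" using chain_mono[OF Suc.prems(1)] by blast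
  show ?case
  proof (cases "l = 0")
    case True
    then show ?thesis using seg_path[of "E 0" "E 1"] m0[of 0 1] bnd[of 1]
      unfolding composable_def pprod_def seg_def by auto
  next
    case False
    have IH: "composable Q (map (\<lambda>k. seg Q p (E k) (E (Suc k))) [0..<l])
      \<and> pprod (map (\<lambda>k. seg Q p (E k) (E (Suc k))) [0..<l]) = seg Q p (E 0) (E l)"
      using Suc.IH Suc.prems False bnd[of l] by simp
    let ?f = "\<lambda>k. seg Q p (E k) (E (Suc k))"
    have split: "map ?f [0..<Suc l] = map ?f [0..<l] @ [?f l]" by simp
    have pp2: "pprod (map ?f [0..<Suc l]) = pcat (seg Q p (E 0) (E l)) (?f l)"
      using IH False unfolding split pprod_def pcat_def by (simp add: prod_eq_iff)
    have "pprod (map ?f [0..<Suc l]) = seg Q p (E 0) (E (Suc l))"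
      using pp2 pcat_seg[of "E 0" "E l" "E (Suc l)"] m0 bnd by simp
    moreover have "composable Q (map ?f [0..<Suc l])"
      unfolding composable_def
    proof (intro conjI allI impI ballI)
      show "map ?f [0..<Suc l] \<noteq> []" by simp
    next
      fix y assume "y \<in> set (map ?f [0..<Suc l])"
      then obtain k where "k < Suc l" "y = ?f k" by (auto simp del: upt_Suc)
      then show "is_path Q y" using seg_path m0 bnd by simp
    next
      fix i assume i: "Suc i < length (map ?f [0..<Suc l])"
      then have "ptgt Q (?f (Suc i)) = vertex_at Q p (E (Suc i))" using ptgt_seg m0 bnd by simp
      then show "ptgt Q (map ?f [0..<Suc l] ! Suc i) = psrc (map ?f [0..<Suc l] ! i)"
        using i psrc_seg by (simp del: upt_Suc)
    qed
    ultimately show ?thesis by simp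
  qed
qed

lemma Bset_seg: "x \<le> y \<Longrightarrow> y \<le> L \<Longrightarrow> seg Q p x y \<in> Bset Q R \<longleftrightarrow> \<not> RelP Q R p x y"
  unfolding Bset_def using seg_path inI_seg by auto

lemma LD_of:
  assumes ld: "left_decomp Q R n q us" and q: "q = seg Q p a b" and ab: "a \<le> b" "b \<le> L"
  shows "\<exists>E. LDpos (RelP Q R p) (length us) E \<and> E 0 = a \<and> E (length us) = b
     \<and> us = map (\<lambda>k. seg Q p (E k) (E (Suc k))) [0..<length us]"
proof -
  let ?l = "length us"
  have cu: "composable Q us" and pu: "pprod us = q" using ld unfolding left_decomp_def by auto
  obtain E where E: "E 0 = a" "E ?l = b" "\<forall>k<?l. E k \<le> E (Suc k)" "\<forall>k<?l. us ! k = seg Q p (E k) (E (Suc k))"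
    using decomp_list[OF cu pu[unfolded q] ab] by blast
  have m0: "\<And>i j. i \<le> j \<Longrightarrow> j \<le> ?l \<Longrightarrow> E i \<le> E j" using chain_mono[OF E(3)] by blast
  have bnd: "\<And>k. k \<le> ?l \<Longrightarrow> E k \<le> L" using m0 E(2) ab by (meson le_trans order_refl)
  have l1: "1 \<le> ?l" using cu unfolding composable_def by (cases us) auto
  have A: "E 1 = E 0"
  proof -
    have "plen (us ! 0) = 0" using ld unfolding left_decomp_def by auto
    moreover have "us ! 0 = seg Q p (E 0) (E 1)" using E(4)[rule_format, of 0] l1 by (cases us) auto
    ultimately show ?thesis using seg_plen[of "E 0" "E 1"] m0[of 0 1] bnd[of 1] l1 by simp
  qed
  have B: "2 \<le> ?l \<longrightarrow> E 2 = Suc (E 1)"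
  proof
    assume l2: "2 \<le> ?l"
    have "plen (us ! 1) = 1" using ld l2 unfolding left_decomp_def by auto
    moreover have "us ! 1 = seg Q p (E 1) (E 2)" using E(4)[rule_format, of 1] l2 by (simp add: numeral_2_eq_2)
    ultimately show "E 2 = Suc (E 1)" using seg_plen[of "E 1" "E 2"] m0[of 1 2] bnd[of 2] l2 by simp
  qed
  have C: "\<forall>k<?l. \<not> RelP Q R p (E k) (E (Suc k))"
  proof (intro allI impI)
    fix k assume k: "k < ?l"
    have "us ! k \<in> Bset Q R" using ld k unfolding left_decomp_def by auto
    then show "\<not> RelP Q R p (E k) (E (Suc k))" using E(4) k Bset_seg m0 bnd by simp
  qed
  have D: "\<forall>k. 1 \<le> k \<and> Suc k < ?l \<longrightarrow> RelP Q R p (E k) (E (k+2)) \<and> (\<forall>y. E k \<le> y \<and> y < E (k+2) \<longrightarrow> \<not> RelP Q R p (E k) y)"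
  proof (intro allI impI)
    fix k assume k: "1 \<le> k \<and> Suc k < ?l"
    have pc: "pcat (us ! k) (us ! Suc k) = seg Q p (E k) (E (k+2))"
      using E(4) k pcat_seg[of "E k" "E (Suc k)" "E (Suc (Suc k))"] m0 bnd by simp
    have i: "inI Q R (pcat (us ! k) (us ! Suc k))" and mn: "\<forall>q. is_suffix Q q (pcat (us ! k) (us ! Suc k))
                 \<and> q \<noteq> pcat (us ! k) (us ! Suc k) \<longrightarrow> \<not> inI Q R q"
      using ld k unfolding left_decomp_def by auto
    have kk: "E k \<le> E (k+2)" "E (k+2) \<le> L" using m0 bnd k by auto
    have r: "RelP Q R p (E k) (E (k+2))" using i pc inI_seg kk by simp
    have "\<forall>y. E k \<le> y \<and> y < E (k+2) \<longrightarrow> \<not> RelP Q R p (E k) y"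
    proof (intro allI impI)
      fix y assume y: "E k \<le> y \<and> y < E (k+2)"
      have sf: "is_suffix Q (seg Q p (E k) y) (seg Q p (E k) (E (k+2)))" using suffix_seg kk y by auto
      have ne: "seg Q p (E k) y \<noteq> seg Q p (E k) (E (k+2))"
      proof
        assume "seg Q p (E k) y = seg Q p (E k) (E (k+2))"
        then have "plen (seg Q p (E k) y) = plen (seg Q p (E k) (E (k+2)))" by simp
        then have "y - E k = E (k+2) - E k" using seg_plen[of "E k" y] seg_plen[of "E k" "E (k+2)"] y kk by simp
        then show False using y by arith
      qed
      have "\<not> inI Q R (seg Q p (E k) y)" using mn[rule_format, of "seg Q p (E k) y"] sf ne pc by simp
      then show "\<not> RelP Q R p (E k) y" using inI_seg y kk by simp
    qed
    then show "RelP Q R p (E k) (E (k+2)) \<and> (\<forall>y. E k \<le> y \<and> y < E (k+2) \<longrightarrow> \<not> RelP Q R p (E k) y)"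
      using r by simp
  qed
  have LD: "LDpos (RelP Q R p) ?l E" unfolding LDpos_def using E(3) A B C D by blast
  have "us = map (\<lambda>k. seg Q p (E k) (E (Suc k))) [0..<?l]"
    by (rule nth_equalityI) (use E(4) in auto)
  then show ?thesis using LD E(1,2) by blast
qed

lemma LD_to:
  assumes LD: "LDpos (RelP Q R p) l E" and l1: "1 \<le> l" and El: "E l \<le> L"
  shows "left_decomp Q R (int l - 2) (seg Q p (E 0) (E l)) (map (\<lambda>k. seg Q p (E k) (E (Suc k))) [0..<l])"
proof -
  let ?us = "map (\<lambda>k. seg Q p (E k) (E (Suc k))) [0..<l]"
  have m0: "\<And>i j. i \<le> j \<Longrightarrow> j \<le> l \<Longrightarrow> E i \<le> E j" using LD_mono[OF LD] by blast
  have bnd: "\<And>k. k \<le> l \<Longrightarrow> E k \<le> L" using m0 El by (meson le_trans order_refl)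
  have mon: "\<forall>k<l. E k \<le> E (Suc k)" using LD_facts(1)[OF LD] by blast
  have bl: "composable Q ?us" "pprod ?us = seg Q p (E 0) (E l)" using build_list[OF mon El l1] by auto
  have p0: "plen (?us ! 0) = 0" using l1 seg_plen[of "E 0" "E 1"] m0[of 0 1] bnd[of 1] LD_facts(2)[OF LD] by simp
  have p1: "length ?us \<ge> 2 \<longrightarrow> plen (?us ! 1) = 1"
    using seg_plen[of "E 1" "E 2"] m0[of 1 2] bnd[of 2] LD_facts(3)[OF LD] by (auto simp: numeral_2_eq_2)
  have bs: "\<forall>x\<in>set ?us. x \<in> Bset Q R"
  proof
    fix x assume "x \<in> set ?us"
    then obtain k where k: "k < l" "x = seg Q p (E k) (E (Suc k))" by auto
    then show "x \<in> Bset Q R" using Bset_seg m0 bnd LD_facts(4)[OF LD] by simp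
  qed
  have rl: "\<forall>k. 1 \<le> k \<and> Suc k < length ?us \<longrightarrow>
          inI Q R (pcat (?us ! k) (?us ! Suc k))
          \<and> (\<forall>q. is_suffix Q q (pcat (?us ! k) (?us ! Suc k))
                 \<and> q \<noteq> pcat (?us ! k) (?us ! Suc k) \<longrightarrow> \<not> inI Q R q)"
  proof (intro allI impI)
    fix k assume k: "1 \<le> k \<and> Suc k < length ?us"
    have kk: "E k \<le> E (Suc k)" "E (Suc k) \<le> E (k+2)" "E (k+2) \<le> L" using m0 bnd k by auto
    have pc: "pcat (?us ! k) (?us ! Suc k) = seg Q p (E k) (E (k+2))"
      using k pcat_seg[of "E k" "E (Suc k)" "E (Suc (Suc k))"] kk by simp
    have r: "RelP Q R p (E k) (E (k+2))" and mn: "\<forall>y. E k \<le> y \<and> y < E (k+2) \<longrightarrow> \<not> RelP Q R p (E k) y"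
      using LD_facts(5,6)[OF LD, of k] k by auto
    have "\<forall>q. is_suffix Q q (seg Q p (E k) (E (k+2))) \<and> q \<noteq> seg Q p (E k) (E (k+2)) \<longrightarrow> \<not> inI Q R q"
    proof (intro allI impI)
      fix q assume a: "is_suffix Q q (seg Q p (E k) (E (k+2))) \<and> q \<noteq> seg Q p (E k) (E (k+2))"
      then obtain y where y: "E k \<le> y" "y \<le> E (k+2)" "q = seg Q p (E k) y" using suffix_seg kk by auto
      then have "y \<noteq> E (k+2)" using a by auto
      then have "\<not> RelP Q R p (E k) y" using mn y by simp
      then show "\<not> inI Q R q" using y inI_seg kk by simp
    qed
    then show "inI Q R (pcat (?us ! k) (?us ! Suc k))
          \<and> (\<forall>q. is_suffix Q q (pcat (?us ! k) (?us ! Suc k))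
                 \<and> q \<noteq> pcat (?us ! k) (?us ! Suc k) \<longrightarrow> \<not> inI Q R q)"
      using pc r inI_seg kk by simp
  qed
  show ?thesis unfolding left_decomp_def using bl p0 p1 bs rl l1 by simp
qed

lemma RD_of:
  assumes rd: "right_decomp Q R n q vs" and q: "q = seg Q p a b" and ab: "a \<le> b" "b \<le> L"
  shows "\<exists>F. RDpos (RelP Q R p) (length vs) F \<and> F 0 = b \<and> F (length vs) = a
     \<and> vs = map (\<lambda>k. seg Q p (F (Suc k)) (F k)) [0..<length vs]"
proof -
  let ?l = "length vs"
  have cu: "composable Q (rev vs)" and pu: "pprod (rev vs) = q" using rd unfolding right_decomp_def by auto
  obtain E where E: "E 0 = a" "E ?l = b" "\<forall>k<?l. E k \<le> E (Suc k)" "\<forall>k<?l. rev vs ! k = seg Q p (E k) (E (Suc k))"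
    using decomp_list[OF cu pu[unfolded q] ab] by auto
  define F where "F k = E (?l - k)" for k
  have m0: "\<And>i j. i \<le> j \<Longrightarrow> j \<le> ?l \<Longrightarrow> E i \<le> E j" using chain_mono[OF E(3)] by blast
  have Fm: "\<And>i j. i \<le> j \<Longrightarrow> j \<le> ?l \<Longrightarrow> F j \<le> F i" unfolding F_def using m0 by simp
  have bnd: "\<And>k. k \<le> ?l \<Longrightarrow> F k \<le> L"
  proof -
    fix k assume "k \<le> ?l"
    have "E (?l - k) \<le> E ?l" using m0[of "?l - k" ?l] by simp
    then show "F k \<le> L" unfolding F_def using E(2) ab by simp
  qed
  have F0: "F 0 = b" and Fl: "F ?l = a" unfolding F_def using E by auto
  have vsk: "\<forall>k<?l. vs ! k = seg Q p (F (Suc k)) (F k)"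
  proof (intro allI impI)
    fix k assume k: "k < ?l"
    have "vs ! k = rev vs ! (?l - Suc k)" using k by (simp add: rev_nth)
    also have "\<dots> = seg Q p (E (?l - Suc k)) (E (Suc (?l - Suc k)))" using E(4) k by simp
    also have "\<dots> = seg Q p (F (Suc k)) (F k)" unfolding F_def using k by (simp add: Suc_diff_Suc)
    finally show "vs ! k = seg Q p (F (Suc k)) (F k)" .
  qed
  have l1: "1 \<le> ?l" using cu unfolding composable_def by (cases vs) auto
  have A: "F 1 = F 0"
  proof -
    have "plen (vs ! 0) = 0" using rd unfolding right_decomp_def by auto
    moreover have "vs ! 0 = seg Q p (F 1) (F 0)" using vsk[rule_format, of 0] l1 by (cases vs) auto
    ultimately show ?thesis using seg_plen[of "F 1" "F 0"] Fm[of 0 1] bnd[of 0] l1 by simp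
  qed
  have B: "2 \<le> ?l \<longrightarrow> Suc (F 2) = F 1"
  proof
    assume l2: "2 \<le> ?l"
    have "plen (vs ! 1) = 1" using rd l2 unfolding right_decomp_def by auto
    moreover have "vs ! 1 = seg Q p (F 2) (F 1)" using vsk[rule_format, of 1] l2 by (simp add: numeral_2_eq_2)
    ultimately show "Suc (F 2) = F 1" using seg_plen[of "F 2" "F 1"] Fm[of 1 2] bnd[of 1] l2 by simp
  qed
  have C: "\<forall>k<?l. \<not> RelP Q R p (F (Suc k)) (F k)"
  proof (intro allI impI)
    fix k assume k: "k < ?l"
    have "vs ! k \<in> Bset Q R" using rd k unfolding right_decomp_def by auto
    then show "\<not> RelP Q R p (F (Suc k)) (F k)" using vsk k Bset_seg Fm bnd by simp
  qed
  have D: "\<forall>k. 1 \<le> k \<and> Suc k < ?l \<longrightarrow> RelP Q R p (F (k+2)) (F k) \<and> (\<forall>x. F (k+2) < x \<and> x \<le> F k \<longrightarrow> \<not> RelP Q R p x (F k))"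
  proof (intro allI impI)
    fix k assume k: "1 \<le> k \<and> Suc k < ?l"
    have kk: "F (k+2) \<le> F (Suc k)" "F (Suc k) \<le> F k" "F k \<le> L" using Fm bnd k by auto
    have pc: "pcat (vs ! Suc k) (vs ! k) = seg Q p (F (k+2)) (F k)"
      using vsk k pcat_seg[of "F (Suc (Suc k))" "F (Suc k)" "F k"] kk by simp
    have i: "inI Q R (pcat (vs ! Suc k) (vs ! k))" and mn: "\<forall>q. is_prefix Q q (pcat (vs ! Suc k) (vs ! k))
                 \<and> q \<noteq> pcat (vs ! Suc k) (vs ! k) \<longrightarrow> \<not> inI Q R q"
      using rd k unfolding right_decomp_def by auto
    have kk2: "F (k+2) \<le> F k" using kk by simp
    have r: "RelP Q R p (F (k+2)) (F k)" using i pc inI_seg kk2 kk by simp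
    have "\<forall>x. F (k+2) < x \<and> x \<le> F k \<longrightarrow> \<not> RelP Q R p x (F k)"
    proof (intro allI impI)
      fix x assume x: "F (k+2) < x \<and> x \<le> F k"
      have sf: "is_prefix Q (seg Q p x (F k)) (seg Q p (F (k+2)) (F k))"
      proof -
        have "\<exists>y. F (k+2) \<le> y \<and> y \<le> F k \<and> seg Q p x (F k) = seg Q p y (F k)"
          using x by (intro exI[of _ x]) auto
        then show ?thesis using prefix_seg[OF kk2 kk(3), of "seg Q p x (F k)"] by blast
      qed
      have ne: "seg Q p x (F k) \<noteq> seg Q p (F (k+2)) (F k)"
      proof
        assume "seg Q p x (F k) = seg Q p (F (k+2)) (F k)"
        then have "plen (seg Q p x (F k)) = plen (seg Q p (F (k+2)) (F k))" by simp
        then have "F k - x = F k - F (k+2)" using seg_plen[of x "F k"] seg_plen[of "F (k+2)" "F k"] x kk kk2 by simp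
        then show False using x by arith
      qed
      have "\<not> inI Q R (seg Q p x (F k))" using mn[rule_format, of "seg Q p x (F k)"] sf ne pc by simp
      then show "\<not> RelP Q R p x (F k)" using inI_seg x kk by simp
    qed
    then show "RelP Q R p (F (k+2)) (F k) \<and> (\<forall>x. F (k+2) < x \<and> x \<le> F k \<longrightarrow> \<not> RelP Q R p x (F k))"
      using r by simp
  qed
  have F3: "\<forall>k<?l. F (Suc k) \<le> F k" using Fm by simp
  have RD: "RDpos (RelP Q R p) ?l F" unfolding RDpos_def using F3 A B C D by blast
  have "vs = map (\<lambda>k. seg Q p (F (Suc k)) (F k)) [0..<?l]"
    by (rule nth_equalityI) (use vsk in auto)
  then show ?thesis using RD F0 Fl by blast
qed

lemma RD_to:
  assumes RD: "RDpos (RelP Q R p) l F" and l1: "1 \<le> l" and F0: "F 0 \<le> L"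
  shows "right_decomp Q R (int l - 2) (seg Q p (F l) (F 0)) (map (\<lambda>k. seg Q p (F (Suc k)) (F k)) [0..<l])"
proof -
  let ?vs = "map (\<lambda>k. seg Q p (F (Suc k)) (F k)) [0..<l]"
  define E where "E j = F (l - j)" for j
  let ?us = "map (\<lambda>k. seg Q p (E k) (E (Suc k))) [0..<l]"
  have Fm: "\<And>i j. i \<le> j \<Longrightarrow> j \<le> l \<Longrightarrow> F j \<le> F i" using RD_mono[OF RD] by blast
  have bnd: "\<And>k. k \<le> l \<Longrightarrow> F k \<le> L" using Fm[of 0] F0 by fastforce
  have revv: "rev ?vs = ?us"
  proof (rule nth_equalityI)
    show "length (rev ?vs) = length ?us" by simp
  next
    fix j assume j: "j < length (rev ?vs)"
    then have j': "j < l" by simp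
    have "rev ?vs ! j = ?vs ! (l - Suc j)" using j' by (simp add: rev_nth)
    also have "\<dots> = seg Q p (F (Suc (l - Suc j))) (F (l - Suc j))" using j' by simp
    also have "\<dots> = ?us ! j" unfolding E_def using j' by (simp add: Suc_diff_Suc)
    finally show "rev ?vs ! j = ?us ! j" .
  qed
  have monE: "\<forall>k<l. E k \<le> E (Suc k)" unfolding E_def using Fm by simp
  have El: "E l \<le> L" unfolding E_def using F0 by simp
  have bl: "composable Q (rev ?vs)" "pprod (rev ?vs) = seg Q p (F l) (F 0)"
    using build_list[OF monE El l1] revv unfolding E_def by auto
  have p0: "plen (?vs ! 0) = 0" using l1 seg_plen[of "F 1" "F 0"] Fm[of 0 1] bnd[of 0] RD_facts(2)[OF RD] by simp
  have p1: "length ?vs \<ge> 2 \<longrightarrow> plen (?vs ! 1) = 1"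
    using seg_plen[of "F 2" "F 1"] Fm[of 1 2] bnd[of 1] RD_facts(3)[OF RD] by (auto simp: numeral_2_eq_2)
  have bs: "\<forall>x\<in>set ?vs. x \<in> Bset Q R"
  proof
    fix x assume "x \<in> set ?vs"
    then obtain k where k: "k < l" "x = seg Q p (F (Suc k)) (F k)" by auto
    then show "x \<in> Bset Q R" using Bset_seg Fm bnd RD_facts(4)[OF RD] by simp
  qed
  have rl: "\<forall>k. 1 \<le> k \<and> Suc k < length ?vs \<longrightarrow>
          inI Q R (pcat (?vs ! Suc k) (?vs ! k))
          \<and> (\<forall>q. is_prefix Q q (pcat (?vs ! Suc k) (?vs ! k))
                 \<and> q \<noteq> pcat (?vs ! Suc k) (?vs ! k) \<longrightarrow> \<not> inI Q R q)"
  proof (intro allI impI)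
    fix k assume k: "1 \<le> k \<and> Suc k < length ?vs"
    have kk: "F (k+2) \<le> F (Suc k)" "F (Suc k) \<le> F k" "F k \<le> L" using Fm bnd k by auto
    have kk2: "F (k+2) \<le> F k" using kk by simp
    have pc: "pcat (?vs ! Suc k) (?vs ! k) = seg Q p (F (k+2)) (F k)"
      using k pcat_seg[of "F (Suc (Suc k))" "F (Suc k)" "F k"] kk by simp
    have r: "RelP Q R p (F (k+2)) (F k)" and mn: "\<forall>x. F (k+2) < x \<and> x \<le> F k \<longrightarrow> \<not> RelP Q R p x (F k)"
      using RD_facts(5,6)[OF RD, of k] k by auto
    have "\<forall>q. is_prefix Q q (seg Q p (F (k+2)) (F k)) \<and> q \<noteq> seg Q p (F (k+2)) (F k) \<longrightarrow> \<not> inI Q R q"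
    proof (intro allI impI)
      fix q assume a: "is_prefix Q q (seg Q p (F (k+2)) (F k)) \<and> q \<noteq> seg Q p (F (k+2)) (F k)"
      then obtain x where x: "F (k+2) \<le> x" "x \<le> F k" "q = seg Q p x (F k)" using prefix_seg kk2 kk by auto
      then have "x \<noteq> F (k+2)" using a by auto
      then have "\<not> RelP Q R p x (F k)" using mn x by simp
      then show "\<not> inI Q R q" using x inI_seg kk by simp
    qed
    then show "inI Q R (pcat (?vs ! Suc k) (?vs ! k))
          \<and> (\<forall>q. is_prefix Q q (pcat (?vs ! Suc k) (?vs ! k))
                 \<and> q \<noteq> pcat (?vs ! Suc k) (?vs ! k) \<longrightarrow> \<not> inI Q R q)"
      using pc r inI_seg kk2 kk by simp
  qed
  show ?thesis unfolding right_decomp_def using bl p0 p1 bs rl l1 by simp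
qed

lemma seg_whole: "seg Q p 0 L = p"
  unfolding seg_def vertex_at_def plen_def by (simp add: prod_eq_iff)

end



theorem mainTheorem4:
  fixes Q :: "('v, 'a) quiver" and R :: "('a, 'v) qpath set" and n :: int
    and p :: "('a, 'v) qpath"
  assumes "monomial_setting Q R"
    and "n \<ge> 0" and "even n"
    and "p \<in> Gamma Q R n"
  shows "Sub Q R n p =
           {(sigma Q R n (n - 1) p, 0),
            (pi Q R n (n - 1) p, plen p - plen (pi Q R n (n - 1) p))}
         \<and> (sigma Q R n (n - 1) p, 0::nat)
             \<noteq> (pi Q R n (n - 1) p, plen p - plen (pi Q R n (n - 1) p))"
proof -
  have ms: "finite_quiver Q" "\<forall>r\<in>R. 2 \<le> plen r" using assms(1) unfolding monomial_setting_def by auto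
  obtain us where ldp: "left_decomp Q R n p us" using assms(4) unfolding Gamma_def by auto
  have pth: "is_path Q p" using ldp pprod_path unfolding left_decomp_def by blast
  interpret pctx Q p using ms(1) pth by unfold_locales
  define N where "N = nat n"
  have nN: "n = int N" using assms(2) N_def by simp
  have evN: "even N" using assms(3) nN by simp
  then obtain m where m: "N = 2 * m" by (auto elim: evenE)
  let ?Rel = "RelP Q R p"
  have mono: "monoR ?Rel" by (rule monoR_RelP)
  have len: "lenR ?Rel" using lenR_RelP ms(2) by blast
  have lus: "length us = N + 2" using ldp nN unfolding left_decomp_def by simp
  obtain E where E: "LDpos ?Rel (N+2) E" "E 0 = 0" "E (N+2) = L"
    "us = map (\<lambda>k. seg Q p (E k) (E (Suc k))) [0..<N+2]"
    using LD_of[OF ldp seg_whole[symmetric]] lus by auto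
  have ENL: "E (N+1) < L" using LD_strict[OF E(1), of "N+1"] E(3) by simp
  have Emon: "\<forall>k<N+2. E k \<le> E (Suc k)" using LD_facts(1)[OF E(1)] by blast
  define F where "F = Fs ?Rel L"
  have RDF: "RDpos ?Rel (N+2) F" and FN: "F (N+2) = 0"
    using LtoR[OF mono len E(1) _ E(3)] E(2) unfolding F_def by auto
  have F0: "F 0 = L" unfolding F_def by simp
  define vs0 where "vs0 = map (\<lambda>k. seg Q p (F (Suc k)) (F k)) [0..<N+2]"
  have rdp: "right_decomp Q R n p vs0"
    using RD_to[OF RDF _, of] F0 FN seg_whole nN unfolding vs0_def by simp
  have theU: "(THE us. left_decomp Q R n p us) = us"
  proof (rule the_equality)
    show "left_decomp Q R n p us" by (rule ldp)
  next
    fix us' assume ld': "left_decomp Q R n p us'"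
    have lus': "length us' = N + 2" using ld' nN unfolding left_decomp_def by simp
    obtain E' where E': "LDpos ?Rel (N+2) E'" "E' 0 = 0" "E' (N+2) = L"
      "us' = map (\<lambda>k. seg Q p (E' k) (E' (Suc k))) [0..<N+2]"
      using LD_of[OF ld' seg_whole[symmetric]] lus' by auto
    have "\<And>k. k \<le> N+2 \<Longrightarrow> E' k = E k" using LD_unique[OF E'(1) E(1)] E'(2) E(2) by simp
    then show "us' = us" using E'(4) E(4) by simp
  qed
  have theV: "(THE vs. right_decomp Q R n p vs) = vs0"
  proof (rule the_equality)
    show "right_decomp Q R n p vs0" by (rule rdp)
  next
    fix vs' assume rd': "right_decomp Q R n p vs'"
    have lvs': "length vs' = N + 2" using rd' nN unfolding right_decomp_def by simp
    obtain F' where F': "RDpos ?Rel (N+2) F'" "F' 0 = L" "F' (N+2) = 0"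
      "vs' = map (\<lambda>k. seg Q p (F' (Suc k)) (F' k)) [0..<N+2]"
      using RD_of[OF rd' seg_whole[symmetric]] lvs' by auto
    have "\<And>k. k \<le> N+2 \<Longrightarrow> F' k = F k" using RD_unique[OF F'(1) RDF] F'(2) F0 by simp
    then show "vs' = vs0" using F'(4) unfolding vs0_def by simp
  qed
  have natN: "nat (n - 1 + 2) = N + 1" using nN by simp
  define \<sigma> where "\<sigma> = seg Q p 0 (E (N+1))"
  have LD1: "LDpos ?Rel (N+1) E" using LD_trunc[OF E(1)] by simp
  have Emon1: "\<forall>k<N+1. E k \<le> E (Suc k)" using Emon by simp
  have sig: "sigma Q R n (n - 1) p = \<sigma>"
  proof -
    have "take (N+1) us = map (\<lambda>k. seg Q p (E k) (E (Suc k))) [0..<N+1]" using E(4) by (simp add: take_map)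
    then show ?thesis unfolding sigma_def theU natN \<sigma>_def using build_list[OF Emon1, of] ENL E(2) by simp
  qed
  have sigG: "\<sigma> \<in> Gamma Q R (n - 1)"
    using LD_to[OF LD1] ENL E(2) nN unfolding Gamma_def \<sigma>_def by fastforce
  define s' where "s' = F (N+1)"
  define \<pi> where "\<pi> = seg Q p s' L"
  have RD1: "RDpos ?Rel (N+1) F" using RD_trunc[OF RDF] by simp
  have s'L: "s' \<le> L" using RD_mono[OF RDF, of 0 "N+1"] F0 unfolding s'_def by simp
  have piE: "pi Q R n (n - 1) p = \<pi>"
  proof -
    have "take (N+1) vs0 = map (\<lambda>k. seg Q p (F (Suc k)) (F k)) [0..<N+1]" unfolding vs0_def by (simp add: take_map)
    moreover have "right_decomp Q R (int (N+1) - 2) (seg Q p (F (N+1)) (F 0)) (map (\<lambda>k. seg Q p (F (Suc k)) (F k)) [0..<N+1])"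
      using RD_to[OF RD1] F0 by simp
    ultimately show ?thesis unfolding pi_def theV natN \<pi>_def s'_def right_decomp_def using F0 by auto
  qed
  have piG: "\<pi> \<in> Gamma Q R (n - 1)"
  proof -
    have r: "LDpos ?Rel (N+1) (Es ?Rel s') \<and> Es ?Rel s' (N+1) = F 0"
      using RtoL[OF mono len RD1 _ s'_def[symmetric]] by simp
    have "left_decomp Q R (int (N+1) - 2) (seg Q p (Es ?Rel s' 0) (Es ?Rel s' (N+1)))
        (map (\<lambda>k. seg Q p (Es ?Rel s' k) (Es ?Rel s' (Suc k))) [0..<N+1])"
      using LD_to[where R=R and l="N+1" and E="Es ?Rel s'"] r F0 by simp
    then show ?thesis using F0 r nN unfolding Gamma_def \<pi>_def by auto
  qed
  have plsig: "plen \<sigma> = E (N+1)" unfolding \<sigma>_def using seg_plen ENL by simp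
  have plpi: "plen \<pi> = L - s'" unfolding \<pi>_def using seg_plen s'L by simp
  have plp: "plen p = L" by (rule plen_p)
  have occ_sig: "occ_at Q \<sigma> 0 p" using occ_p_iff[of \<sigma> 0] seg_path ENL plsig unfolding \<sigma>_def by simp
  have occ_pi: "occ_at Q \<pi> s' p" using occ_p_iff[of \<pi> s'] seg_path s'L plpi unfolding \<pi>_def by simp
  have sub1: "Sub Q R n p \<subseteq> {(\<sigma>, 0), (\<pi>, L - plen \<pi>)}"
  proof
    fix x assume "x \<in> Sub Q R n p"
    then obtain q i where x: "x = (q, i)" and qG: "q \<in> Gamma Q R (n - 1)" and oc: "occ_at Q q i p"
      unfolding Sub_def by auto
    obtain uq where ldq: "left_decomp Q R (n - 1) q uq" using qG unfolding Gamma_def by auto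
    have luq: "length uq = N + 1" using ldq nN unfolding left_decomp_def by simp
    have oq: "i + plen q \<le> L" "q = seg Q p i (i + plen q)" using oc occ_p_iff by auto
    obtain G where G: "LDpos ?Rel (N+1) G" "G 0 = i" "G (N+1) = i + plen q"
      using LD_of[OF ldq oq(2) _ oq(1)] luq by auto
    show "x \<in> {(\<sigma>, 0), (\<pi>, L - plen \<pi>)}"
    proof (cases "i = 0")
      case True
      have "G (N+1) = E (N+1)" using LD_unique[OF G(1) E(1), of "N+1"] G(2) E(2) True by simp
      then have "q = \<sigma>" using oq(2) G(3) True unfolding \<sigma>_def by simp
      then show ?thesis using x True by simp
    next
      case False
      have LE': "LDpos ?Rel (2*m+2) E" using E(1) m by simp
      have LG': "LDpos ?Rel (2*m+1) G" using G(1) m by simp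
      have "E (2*m+2) \<le> G (2*m+1)" using even_main[OF mono LE' LG'] E(2) G(2) False by simp
      then have tL: "i + plen q = L" using E(3) G(3) m oq(1) by simp
      have "Fs ?Rel L (N+1) = G 0" using LtoR[OF mono len G(1) _ ] G(3) tL by simp
      then have si: "s' = i" unfolding s'_def F_def using G(2) by simp
      have "q = \<pi>" using oq(2) tL si unfolding \<pi>_def by simp
      moreover have "i = L - plen \<pi>" using plpi si s'L by simp
      ultimately show ?thesis using x by simp
    qed
  qed
  have sub2: "{(\<sigma>, 0), (\<pi>, L - plen \<pi>)} \<subseteq> Sub Q R n p"
    using sigG piG occ_sig occ_pi plpi s'L unfolding Sub_def by auto
  have dist: "(\<sigma>, 0::nat) \<noteq> (\<pi>, L - plen \<pi>)"
  proof
    assume eq: "(\<sigma>, 0::nat) = (\<pi>, L - plen \<pi>)"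
    then have "plen \<pi> = E (N+1)" using plsig by simp
    then show False using eq ENL by simp
  qed
  show ?thesis using sub1 sub2 dist sig piE plp by auto
qed

end
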